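(* Let $\lambda>0$ and $\mu>0$. Let $X$ be Poisson with parameter $\mu$, let $Y$ be a random variable with values in $\{0,1,2,\dots\}$ with $\mathrm{E}[Y]=\mu$ and $\mathrm{E}[Y^2]<\infty$, and for each $n\ge\lambda^2$ let $A_n$ be an event with $P(A_n)=1-\frac{\lambda}{\sqrt n}$, with $X$, $Y$, $I(A_n)$ independent. Let $X^{(n)}$ have the distribution of $I(A_n)X+I(A_n^c)Y$, and let $X^{(n)}_1,\dots,X^{(n)}_n$ be i.i.d. copies of $X^{(n)}$, with sample mean $\overline X_n'$ and empirical distribution function $F_n'$. For a fixed natural number $k$, with $f_k(m)=e^{-m}\sum_{j=0}^k\frac{m^j}{j!}$, let $$U_n^{(k)}=\sqrt n\,\{f_k(\overline X_n')-F_n'(k)\}.$$ Then $U_n^{(k)}$ converges in distribution as $n\to\infty$ to $\mathcal N(\tau_k,\sigma^2_{\mu,k})$, where $\tau_k=-\lambda\{P(Y\le k)-f_k(\mu)\}$ and $\sigma^2_{\mu,k}=f_k(\mu)\{1-f_k(\mu)\}-\frac{e^{-2\mu}\mu^{2k+1}}{(k!)^2}$. In particular, $U_n^{(k_n^* )}$ has the same asymptotic behaviour as $U_n^{(0)}$, which converges in distribution to $\mathcal N\big(\lambda\{e^{-\mu}-P(Y=0)\},\,e^{-2\mu}(e^{\mu}-1-\mu)\big)$, where $$k_n^*=\min\Big\{k\ge 0:\ I(\overline X_n'\ge 1)\,\frac{\widetilde\sigma_{n,k}}{f_k^2(\overline X_n')\sqrt n}\le e\Big\},$$ $$\widetilde\sigma^2_{n,k}=e^{-2\overline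 X_n'}\Big\{\Big(\sum_{j=0}^k\frac{(\overline X_n')^j}{j!}\Big)\Big(e^{\overline X_n'}-\sum_{j=0}^k\frac{(\overline X_n')^j}{j!}\Big)-\frac{(\overline X_n')^{2k+1}}{(k!)^2}\Big\},\quad \widetilde\sigma_{n,k}=\sqrt{\widetilde\sigma^2_{n,k}}.$$
   Context: $I(\cdot)$ is the indicator function; $F_n'(k)=\frac1n\sum_{i=1}^n I(X_i^{(n)}\le k)$. *)

theory Defs
  imports "HOL-Probability.Probability"
begin

definition fk :: "nat \<Rightarrow> real \<Rightarrow> real" where
  "fk k m = exp (- m) * (\<Sum>j\<le>k. m ^ j / fact j)"

(* Distribution of X^(n) = I(A_n) X + I(A_n^c) Y with X ~ Poisson(mu), Y ~ Y,
   P(A_n) = 1 - lambda / sqrt n, X, Y, I(A_n) independent.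
   (bernoulli_pmf clamps its parameter to [0,1]; only relevant for n < lambda^2.) *)
definition Xn_pmf :: "real \<Rightarrow> real \<Rightarrow> nat pmf \<Rightarrow> nat \<Rightarrow> nat pmf" where
  "Xn_pmf lam mu Y n =
     bind_pmf (bernoulli_pmf (1 - lam / sqrt (real n)))
              (\<lambda>a. if a then poisson_pmf mu else Y)"

definition sample_pmf :: "real \<Rightarrow> real \<Rightarrow> nat pmf \<Rightarrow> nat \<Rightarrow> (nat \<Rightarrow> nat) pmf" where
  "sample_pmf lam mu Y n = Pi_pmf {..<n} 0 (\<lambda>_. Xn_pmf lam mu Y n)"

definition sample_mean :: "nat \<Rightarrow> (nat \<Rightarrow> nat) \<Rightarrow> real" where
  "sample_mean n \<omega> = (\<Sum>i<n. real (\<omega> i)) / real n"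

definition emp_cdf :: "nat \<Rightarrow> (nat \<Rightarrow> nat) \<Rightarrow> nat \<Rightarrow> real" where
  "emp_cdf n \<omega> k = (\<Sum>i<n. of_bool (\<omega> i \<le> k)) / real n"

definition U :: "nat \<Rightarrow> nat \<Rightarrow> (nat \<Rightarrow> nat) \<Rightarrow> real" where
  "U n k \<omega> = sqrt (real n) * (fk k (sample_mean n \<omega>) - emp_cdf n \<omega> k)"

definition sigma_tilde_sq :: "nat \<Rightarrow> real \<Rightarrow> real" where
  "sigma_tilde_sq k m = exp (- 2 * m) *
     ((\<Sum>j\<le>k. m ^ j / fact j) * (exp m - (\<Sum>j\<le>k. m ^ j / fact j))
      - m ^ (2 * k + 1) / (fact k) ^ 2)"

definition kstar :: "nat \<Rightarrow> (nat \<Rightarrow> nat) \<Rightarrow> nat" where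
  "kstar n \<omega> = (LEAST k. of_bool (sample_mean n \<omega> \<ge> 1) *
        sqrt (sigma_tilde_sq k (sample_mean n \<omega>))
        / ((fk k (sample_mean n \<omega>))\<^sup>2 * sqrt (real n)) \<le> exp 1)"

definition normal_measure :: "real \<Rightarrow> real \<Rightarrow> real measure" where
  "normal_measure m s2 =
     (if s2 > 0 then density lborel (normal_density m (sqrt s2)) else return borel m)"

end

theory Submission
  imports Defs
begin

lemma cts_step_01:
  assumes "x < y"
  shows "0 \<le> cts_step x y v" "cts_step x y v \<le> 1"
  using assms by (auto simp: cts_step_def field_split_simps)
lemma cts_step_clamp:
  assumes "x < y"
  shows "cts_step x y v = max 0 (min 1 ((y - v) / (y - x)))"
  using assms by (auto simp: cts_step_def field_split_simps max_def min_def)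
lemma cts_step_lip0:
  assumes "x < y"
  shows "\<bar>cts_step x y a - cts_step x y b\<bar> \<le> \<bar>a - b\<bar> / (y - x)"
proof -
  have c: "\<bar>max 0 (min 1 u) - max 0 (min 1 w)\<bar> \<le> \<bar>u - w\<bar>" for u w :: real
    by (auto simp: max_def min_def abs_if)
  have "\<bar>(y - a) / (y - x) - (y - b) / (y - x)\<bar> = \<bar>a - b\<bar> / (y - x)"
    using assms by (simp add: diff_divide_distrib[symmetric] abs_minus_commute)
  then show ?thesis using c[of "(y - a) / (y - x)" "(y - b) / (y - x)"]
    by (simp add: cts_step_clamp[OF assms])
qed

lemma cts_step_lip:
  assumes "x < y"
  shows "\<bar>cts_step x y a - cts_step x y b\<bar> \<le> max 1 (1 / (y - x)) * min 1 \<bar>a - b\<bar>"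
proof -
  have b1: "\<bar>cts_step x y a - cts_step x y b\<bar> \<le> 1"
    using cts_step_01[OF assms, of a] cts_step_01[OF assms, of b] by linarith
  have b2: "\<bar>cts_step x y a - cts_step x y b\<bar> \<le> \<bar>a - b\<bar> / (y - x)"
    using assms by (auto simp: cts_step_def divide_simps abs_if)
  show ?thesis
  proof (cases "\<bar>a - b\<bar> \<le> 1")
    case True
    have "1 / (y - x) \<le> max 1 (1 / (y - x))" by simp
    then have "\<bar>a - b\<bar> / (y - x) \<le> max 1 (1 / (y - x)) * \<bar>a - b\<bar>"
      by (metis abs_ge_zero mult_right_mono times_divide_eq_left mult_1)
    then show ?thesis using b2 True by (simp add: min_def)
  next
    case False
    then show ?thesis using b1 by (simp add: min_def)
  qed
qed

lemma slutsky:
  fixes M :: "nat \<Rightarrow> 'a measure" and W Z :: "nat \<Rightarrow> 'a \<Rightarrow> real" and L :: "real measure"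
  assumes ps: "\<And>n. prob_space (M n)"
    and Wm: "\<And>n. W n \<in> borel_measurable (M n)"
    and Zm: "\<And>n. Z n \<in> borel_measurable (M n)"
    and L: "real_distribution L"
    and conv: "weak_conv_m (\<lambda>n. distr (M n) borel (Z n)) L"
    and close: "(\<lambda>n. \<integral>\<omega>. min 1 \<bar>W n \<omega> - Z n \<omega>\<bar> \<partial>M n) \<longlonglongrightarrow> 0"
  shows "weak_conv_m (\<lambda>n. distr (M n) borel (W n)) L"
proof (rule integral_cts_step_conv_imp_weak_conv)
  show "real_distribution (distr (M n) borel (W n))" for n
    using ps Wm by (simp add: real_distribution_def real_distribution_axioms_def prob_space.prob_space_distr)
  have rdZ: "real_distribution (distr (M n) borel (Z n))" for n
    using ps Zm by (simp add: real_distribution_def real_distribution_axioms_def prob_space.prob_space_distr)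
  show "real_distribution L" by fact
  fix x y :: real assume xy: "x < y"
  define C where "C = max 1 (1 / (y - x))"
  have cZ: "(\<lambda>n. integral\<^sup>L (distr (M n) borel (Z n)) (cts_step x y)) \<longlonglongrightarrow> integral\<^sup>L L (cts_step x y)"
    apply (rule weak_conv_imp_integral_bdd_continuous_conv[where B=1, OF rdZ L conv])
    using xy cts_step_uniformly_continuous[OF xy]
    apply (meson UNIV_I continuous_on_eq_continuous_at open_UNIV uniformly_continuous_imp_continuous)
    using cts_step_01[OF xy] by (simp add: abs_le_iff)
  have meas: "(\<lambda>v. cts_step x y v) \<in> borel_measurable borel"
    using cts_step_uniformly_continuous[OF xy]
    by (intro borel_measurable_continuous_onI uniformly_continuous_imp_continuous)
  have eqW: "integral\<^sup>L (distr (M n) borel (W n)) (cts_step x y) = (\<integral>\<omega>. cts_step x y (W n \<omega>) \<partial>M n)" for n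
    using meas Wm by (simp add: integral_distr)
  have eqZ: "integral\<^sup>L (distr (M n) borel (Z n)) (cts_step x y) = (\<integral>\<omega>. cts_step x y (Z n \<omega>) \<partial>M n)" for n
    using meas Zm by (simp add: integral_distr)
  have bnd: "\<bar>(\<integral>\<omega>. cts_step x y (W n \<omega>) \<partial>M n) - (\<integral>\<omega>. cts_step x y (Z n \<omega>) \<partial>M n)\<bar>
      \<le> C * (\<integral>\<omega>. min 1 \<bar>W n \<omega> - Z n \<omega>\<bar> \<partial>M n)" for n
  proof -
    interpret prob_space "M n" by (rule ps)
    have mW: "(\<lambda>\<omega>. cts_step x y (W n \<omega>)) \<in> borel_measurable (M n)"
      using meas Wm by (rule measurable_compose[rotated])
    have mZ: "(\<lambda>\<omega>. cts_step x y (Z n \<omega>)) \<in> borel_measurable (M n)"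
      using meas Zm by (rule measurable_compose[rotated])
    have iW: "integrable (M n) (\<lambda>\<omega>. cts_step x y (W n \<omega>))"
      by (rule integrable_const_bound[where B=1]) (use mW cts_step_01[OF xy] in auto)
    have iZ: "integrable (M n) (\<lambda>\<omega>. cts_step x y (Z n \<omega>))"
      by (rule integrable_const_bound[where B=1]) (use mZ cts_step_01[OF xy] in auto)
    have mD: "(\<lambda>\<omega>. min 1 \<bar>W n \<omega> - Z n \<omega>\<bar>) \<in> borel_measurable (M n)"
      by (intro borel_measurable_min borel_measurable_const borel_measurable_abs borel_measurable_diff Wm Zm)
    have iD: "integrable (M n) (\<lambda>\<omega>. min 1 \<bar>W n \<omega> - Z n \<omega>\<bar>)"
      by (rule integrable_const_bound[where B=1]) (use mD in auto)
    have "\<bar>(\<integral>\<omega>. cts_step x y (W n \<omega>) \<partial>M n) - (\<integral>\<omega>. cts_step x y (Z n \<omega>) \<partial>M n)\<bar>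
        = \<bar>\<integral>\<omega>. cts_step x y (W n \<omega>) - cts_step x y (Z n \<omega>) \<partial>M n\<bar>"
      using iW iZ by simp
    also have "\<dots> \<le> (\<integral>\<omega>. \<bar>cts_step x y (W n \<omega>) - cts_step x y (Z n \<omega>)\<bar> \<partial>M n)"
      by (rule integral_abs_bound)
    also have "\<dots> \<le> (\<integral>\<omega>. C * min 1 \<bar>W n \<omega> - Z n \<omega>\<bar> \<partial>M n)"
      apply (rule integral_mono)
      using iW iZ iD apply auto[2]
      using cts_step_lip[OF xy] unfolding C_def by blast
    also have "\<dots> = C * (\<integral>\<omega>. min 1 \<bar>W n \<omega> - Z n \<omega>\<bar> \<partial>M n)" by simp
    finally show ?thesis .
  qed
  have t0: "(\<lambda>n. C * (\<integral>\<omega>. min 1 \<bar>W n \<omega> - Z n \<omega>\<bar> \<partial>M n)) \<longlonglongrightarrow> 0"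
    using tendsto_mult_right_zero[OF close, of C] .
  have d0: "(\<lambda>n. (\<integral>\<omega>. cts_step x y (W n \<omega>) \<partial>M n) - (\<integral>\<omega>. cts_step x y (Z n \<omega>) \<partial>M n)) \<longlonglongrightarrow> 0"
    apply (rule Lim_null_comparison[OF _ t0])
    apply (rule always_eventually)
    using bnd by simp
  have "(\<lambda>n. ((\<integral>\<omega>. cts_step x y (W n \<omega>) \<partial>M n) - (\<integral>\<omega>. cts_step x y (Z n \<omega>) \<partial>M n))
      + (\<integral>\<omega>. cts_step x y (Z n \<omega>) \<partial>M n)) \<longlonglongrightarrow> 0 + integral\<^sup>L L (cts_step x y)"
    by (intro tendsto_add d0) (use cZ eqZ in simp)
  then show "(\<lambda>n. integral\<^sup>L (distr (M n) borel (W n)) (cts_step x y)) \<longlonglongrightarrow> integral\<^sup>L L (cts_step x y)"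
    by (simp add: eqW)
qed

lemma weak_conv_cont_map:
  fixes M :: "nat \<Rightarrow> real measure" and h :: "real \<Rightarrow> real"
  assumes rd: "\<And>n. real_distribution (M n)" and L: "real_distribution L"
    and conv: "weak_conv_m M L" and cont: "\<And>x. isCont h x"
  shows "weak_conv_m (\<lambda>n. distr (M n) borel h) (distr L borel h)"
proof -
  have hm: "h \<in> borel_measurable borel"
    using cont by (intro borel_measurable_continuous_onI continuous_at_imp_continuous_on) auto
  have rd2: "real_distribution (distr N borel h)" if "real_distribution N" for N
  proof -
    interpret real_distribution N by fact
    show ?thesis unfolding real_distribution_def real_distribution_axioms_def
      using hm by (simp add: prob_space_distr)
  qed
  show ?thesis
  proof (rule integral_bdd_continuous_conv_imp_weak_conv)
    show "real_distribution (distr (M n) borel h)" for n by (rule rd2[OF rd])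
    show "real_distribution (distr L borel h)" by (rule rd2[OF L])
    fix f :: "real \<Rightarrow> real" assume fc: "\<And>x. isCont f x" and fb: "\<And>x. \<bar>f x\<bar> \<le> 1"
    have fm: "f \<in> borel_measurable borel"
      using fc by (intro borel_measurable_continuous_onI continuous_at_imp_continuous_on) auto
    have ic: "isCont (\<lambda>x. f (h x)) x" for x
      by (rule isCont_o2[OF cont fc])
    have "(\<lambda>n. integral\<^sup>L (M n) (\<lambda>x. f (h x))) \<longlonglongrightarrow> integral\<^sup>L L (\<lambda>x. f (h x))"
      by (rule weak_conv_imp_integral_bdd_continuous_conv[where B=1, OF rd L conv ic]) (simp add: fb)
    moreover have "integral\<^sup>L (distr N borel h) f = integral\<^sup>L N (\<lambda>x. f (h x))" if "real_distribution N" for N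
    proof -
      interpret real_distribution N by fact
      show ?thesis using hm fm by (simp add: integral_distr)
    qed
    ultimately show "(\<lambda>n. integral\<^sup>L (distr (M n) borel h) f) \<longlonglongrightarrow> integral\<^sup>L (distr L borel h) f"
      using rd L by simp
  qed
qed

lemma normal_affine_eq:
  assumes s: "s > 0"
  shows "distr std_normal_distribution borel (\<lambda>x. m + s * x) = normal_measure m (s\<^sup>2)"
proof -
  interpret P: prob_space std_normal_distribution by (rule prob_space_normal_density) simp
  have "distributed std_normal_distribution lborel (\<lambda>x. x) (normal_density 0 1)"
    unfolding distributed_def by (simp add: distr_id2)
  from P.normal_density_affine[OF this, where \<alpha>=s and \<beta>=m] s
  have "distributed std_normal_distribution lborel (\<lambda>x. m + s * x) (normal_density m s)"
    by simp
  then have "distr std_normal_distribution lborel (\<lambda>x. m + s * x) = density lborel (normal_density m s)"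
    by (simp add: distributed_def)
  moreover have "distr std_normal_distribution borel (\<lambda>x. m + s * x) = distr std_normal_distribution lborel (\<lambda>x. m + s * x)"
    by (rule distr_cong) auto
  ultimately show ?thesis using s by (simp add: normal_measure_def)
qed

lemma pmf_integrable_iff:
  fixes p :: "'a pmf" and h :: "'a \<Rightarrow> real"
  shows "integrable (measure_pmf p) h \<longleftrightarrow> integrable (count_space UNIV) (\<lambda>j. pmf p j * h j)"
  unfolding measure_pmf_eq_density by (subst integrable_density) auto

lemma pmf_integral_eq:
  fixes p :: "'a pmf" and h :: "'a \<Rightarrow> real"
  shows "measure_pmf.expectation p h = integral\<^sup>L (count_space UNIV) (\<lambda>j. pmf p j * h j)"
  unfolding measure_pmf_eq_density by (subst integral_density) auto

definition mix_pmf :: "real \<Rightarrow> 'a pmf \<Rightarrow> 'a pmf \<Rightarrow> 'a pmf" where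
  "mix_pmf q P Q = bind_pmf (bernoulli_pmf q) (\<lambda>a. if a then P else Q)"

lemma pmf_mix:
  assumes "0 \<le> q" "q \<le> 1"
  shows "pmf (mix_pmf q P Q) j = q * pmf P j + (1 - q) * pmf Q j"
  using assms by (simp add: mix_pmf_def pmf_bind)

lemma mix_integrable:
  fixes h :: "'a \<Rightarrow> real"
  assumes q: "0 \<le> q" "q \<le> 1"
    and iP: "integrable (measure_pmf P) h" and iQ: "integrable (measure_pmf Q) h"
  shows "integrable (measure_pmf (mix_pmf q P Q)) h"
proof -
  have "integrable (count_space UNIV) (\<lambda>j. q * (pmf P j * h j) + (1 - q) * (pmf Q j * h j))"
    using iP iQ by (intro Bochner_Integration.integrable_add integrable_mult_right) (auto simp: pmf_integrable_iff)
  then show ?thesis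
    by (simp add: pmf_integrable_iff pmf_mix[OF q] algebra_simps)
qed

lemma mix_integral:
  fixes h :: "'a \<Rightarrow> real"
  assumes q: "0 \<le> q" "q \<le> 1"
    and iP: "integrable (measure_pmf P) h" and iQ: "integrable (measure_pmf Q) h"
  shows "measure_pmf.expectation (mix_pmf q P Q) h
       = q * measure_pmf.expectation P h + (1 - q) * measure_pmf.expectation Q h"
proof -
  have i1: "integrable (count_space UNIV) (\<lambda>j. q * (pmf P j * h j))"
    using iP by (intro integrable_mult_right) (auto simp: pmf_integrable_iff)
  have i2: "integrable (count_space UNIV) (\<lambda>j. (1 - q) * (pmf Q j * h j))"
    using iQ by (intro integrable_mult_right) (auto simp: pmf_integrable_iff)
  have "measure_pmf.expectation (mix_pmf q P Q) h
      = integral\<^sup>L (count_space UNIV) (\<lambda>j. q * (pmf P j * h j) + (1 - q) * (pmf Q j * h j))"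
    by (simp add: pmf_integral_eq pmf_mix[OF q] algebra_simps)
  also have "\<dots> = q * measure_pmf.expectation P h + (1 - q) * measure_pmf.expectation Q h"
    using i1 i2 by (simp add: pmf_integral_eq)
  finally show ?thesis .
qed

lemma Xn_pmf_mix: "Xn_pmf lam mu Y n = mix_pmf (1 - lam / sqrt (real n)) (poisson_pmf mu) Y"
  by (simp add: Xn_pmf_def mix_pmf_def)

lemma q_range:
  assumes "lam > 0" "real n \<ge> lam\<^sup>2" "n > 0"
  shows "0 \<le> 1 - lam / sqrt (real n)" "1 - lam / sqrt (real n) \<le> 1"
proof -
  have "lam \<le> sqrt (real n)"
    using assms real_le_rsqrt by auto
  then show "0 \<le> 1 - lam / sqrt (real n)" using assms by (simp add: divide_le_eq_1)
  show "1 - lam / sqrt (real n) \<le> 1" using assms by simp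
qed

lemma exp_series_real: "(\<lambda>j. x ^ j / fact j) sums exp (x::real)"
  using exp_converges[of x] by (simp add: divide_inverse mult.commute scaleR_conv_of_real)

lemma exp_series1: "(\<lambda>j. x ^ j / fact j * real j) sums (x * exp (x::real))"
proof -
  have "(\<lambda>i. x ^ Suc i / fact (Suc i) * real (Suc i)) = (\<lambda>i. x * (x ^ i / fact i))"
    by (rule ext) (simp add: field_simps del: of_nat_Suc)
  moreover have "(\<lambda>i. x * (x ^ i / fact i)) sums (x * exp x)"
    by (rule sums_mult[OF exp_series_real])
  ultimately have "(\<lambda>i. x ^ Suc i / fact (Suc i) * real (Suc i)) sums (x * exp x)" by simp
  then show ?thesis by (subst (asm) sums_Suc_iff) simp
qed

lemma exp_series2: "(\<lambda>j. x ^ j / fact j * (real j)\<^sup>2) sums ((x\<^sup>2 + x) * exp (x::real))"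
proof -
  have "(\<lambda>i. x ^ Suc i / fact (Suc i) * (real (Suc i))\<^sup>2) = (\<lambda>i. x * (x ^ i / fact i * real i + x ^ i / fact i))"
    by (rule ext) (simp add: field_simps power2_eq_square del: of_nat_Suc, simp add: algebra_simps)
  moreover have "(\<lambda>i. x * (x ^ i / fact i * real i + x ^ i / fact i)) sums (x * (x * exp x + exp x))"
    by (intro sums_mult sums_add exp_series1 exp_series_real)
  ultimately have "(\<lambda>i. x ^ Suc i / fact (Suc i) * (real (Suc i))\<^sup>2) sums ((x\<^sup>2 + x) * exp x)"
    by (simp add: algebra_simps power2_eq_square)
  then show ?thesis by (subst (asm) sums_Suc_iff) simp
qed

lemma poisson_moment:
  fixes mu :: real and h :: "nat \<Rightarrow> real" and s :: real
  assumes mu: "mu > 0" and nn: "\<And>j. h j \<ge> 0"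
    and sm: "(\<lambda>j. mu ^ j / fact j * h j) sums s"
  shows "integrable (measure_pmf (poisson_pmf mu)) h"
    "measure_pmf.expectation (poisson_pmf mu) h = exp (- mu) * s"
proof -
  have sm': "(\<lambda>j. pmf (poisson_pmf mu) j * h j) sums (exp (- mu) * s)"
    using sums_mult[OF sm, of "exp (-mu)"] mu by (simp add: algebra_simps)
  have ic: "integrable (count_space UNIV) (\<lambda>j. pmf (poisson_pmf mu) j * h j)"
    unfolding integrable_count_space_nat_iff
    using sm' nn mu by (simp add: abs_mult sums_summable)
  then show "integrable (measure_pmf (poisson_pmf mu)) h"
    by (simp add: pmf_integrable_iff)
  show "measure_pmf.expectation (poisson_pmf mu) h = exp (- mu) * s"
    using ic sm' by (simp add: pmf_integral_eq integral_count_space_nat sums_iff)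
qed

lemma poisson_mean:
  assumes "mu > 0"
  shows "integrable (measure_pmf (poisson_pmf mu)) real"
    "measure_pmf.expectation (poisson_pmf mu) real = mu"
proof -
  have e: "exp (- mu) * (mu * exp mu) = mu" by (simp add: exp_minus field_simps)
  show "integrable (measure_pmf (poisson_pmf mu)) real" "measure_pmf.expectation (poisson_pmf mu) real = mu"
    using poisson_moment[OF assms, of real, OF _ exp_series1] e by auto
qed

lemma poisson_sq:
  assumes "mu > 0"
  shows "integrable (measure_pmf (poisson_pmf mu)) (\<lambda>j. (real j)\<^sup>2)"
    "measure_pmf.expectation (poisson_pmf mu) (\<lambda>j. (real j)\<^sup>2) = mu\<^sup>2 + mu"
proof -
  have e: "exp (- mu) * ((mu\<^sup>2 + mu) * exp mu) = mu\<^sup>2 + mu" by (simp add: exp_minus field_simps)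
  show "integrable (measure_pmf (poisson_pmf mu)) (\<lambda>j. (real j)\<^sup>2)"
    "measure_pmf.expectation (poisson_pmf mu) (\<lambda>j. (real j)\<^sup>2) = mu\<^sup>2 + mu"
    using poisson_moment[OF assms, of "\<lambda>j. (real j)\<^sup>2", OF _ exp_series2] e by auto
qed

lemma poisson_cdf:
  assumes "mu > 0"
  shows "measure_pmf.expectation (poisson_pmf mu) (\<lambda>j. of_bool (j \<le> k)) = fk k mu"
proof -
  have "measure_pmf.expectation (poisson_pmf mu) (\<lambda>j. of_bool (j \<le> k)) = (\<Sum>a\<le>k. of_bool (a \<le> k) * pmf (poisson_pmf mu) a)"
    by (rule integral_measure_pmf_real) auto
  also have "\<dots> = fk k mu"
    using assms by (simp add: fk_def sum_distrib_left field_simps)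
  finally show ?thesis .
qed

lemma poisson_trunc_mean_sum:
  "(\<Sum>a\<le>k. real a * (mu ^ a / fact a * exp (- mu))) = mu * (fk k mu - exp (- mu) * mu ^ k / fact k)"
proof (induction k)
  case 0
  then show ?case by (simp add: fk_def)
next
  case (Suc k)
  have "fk (Suc k) mu = fk k mu + exp (- mu) * mu ^ Suc k / fact (Suc k)"
    by (simp add: fk_def algebra_simps)
  moreover have "real (Suc k) * (mu ^ Suc k / fact (Suc k) * exp (- mu)) = mu * (exp (- mu) * mu ^ k / fact k)"
    by (simp add: field_simps del: of_nat_Suc)
  ultimately show ?case
    apply (subst sum.atMost_Suc)
    apply (subst Suc.IH)
    by (simp add: algebra_simps)
qed

lemma poisson_trunc_mean:
  assumes "mu > 0"
  shows "measure_pmf.expectation (poisson_pmf mu) (\<lambda>j. real j * of_bool (j \<le> k))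
     = mu * (fk k mu - exp (- mu) * mu ^ k / fact k)"
proof -
  have "measure_pmf.expectation (poisson_pmf mu) (\<lambda>j. real j * of_bool (j \<le> k)) = (\<Sum>a\<le>k. real a * of_bool (a \<le> k) * pmf (poisson_pmf mu) a)"
    by (rule integral_measure_pmf_real) auto
  also have "\<dots> = (\<Sum>a\<le>k. real a * (mu ^ a / fact a * exp (- mu)))"
    using assms by (intro sum.cong) auto
  also have "\<dots> = mu * (fk k mu - exp (- mu) * mu ^ k / fact k)"
    by (rule poisson_trunc_mean_sum)
  finally show ?thesis .
qed

lemma Pi_comp_map:
  assumes "i < (n::nat)"
  shows "map_pmf (\<lambda>f. f i) (Pi_pmf {..<n} d (\<lambda>_. p)) = p"
  using assms by (subst Pi_pmf_component) auto

lemma Pi_comp_integral: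
  fixes h :: "'a \<Rightarrow> 'b::{banach, second_countable_topology}"
  assumes "i < (n::nat)"
  shows "measure_pmf.expectation (Pi_pmf {..<n} d (\<lambda>_. p)) (\<lambda>\<omega>. h (\<omega> i)) = measure_pmf.expectation p h"
proof -
  have "measure_pmf.expectation p h = measure_pmf.expectation (map_pmf (\<lambda>f. f i) (Pi_pmf {..<n} d (\<lambda>_. p))) h"
    by (simp add: Pi_comp_map[OF assms])
  also have "\<dots> = measure_pmf.expectation (Pi_pmf {..<n} d (\<lambda>_. p)) (\<lambda>\<omega>. h (\<omega> i))"
    by (rule integral_map_pmf)
  finally show ?thesis ..
qed

lemma Pi_comp_integrable:
  fixes h :: "'a \<Rightarrow> 'b::{banach, second_countable_topology}"
  assumes "i < (n::nat)"
  shows "integrable (measure_pmf (Pi_pmf {..<n} d (\<lambda>_. p))) (\<lambda>\<omega>. h (\<omega> i)) \<longleftrightarrow> integrable (measure_pmf p) h"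
proof -
  have "integrable (measure_pmf p) h \<longleftrightarrow> integrable (measure_pmf (map_pmf (\<lambda>f. f i) (Pi_pmf {..<n} d (\<lambda>_. p)))) h"
    by (simp add: Pi_comp_map[OF assms])
  also have "\<dots> \<longleftrightarrow> integrable (measure_pmf (Pi_pmf {..<n} d (\<lambda>_. p))) (\<lambda>\<omega>. h (\<omega> i))"
    by (rule integrable_map_pmf_eq)
  finally show ?thesis ..
qed

lemma Pi_indep:
  fixes h :: "'i \<Rightarrow> 'a \<Rightarrow> 'b::topological_space"
  assumes "finite I"
  shows "prob_space.indep_vars (measure_pmf (Pi_pmf I d p)) (\<lambda>_. borel) (\<lambda>i \<omega>. h i (\<omega> i)) I"
  using prob_space.indep_vars_compose2[OF measure_pmf.prob_space_axioms indep_vars_Pi_pmf[OF assms], of h "\<lambda>_. borel"]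
  by simp

lemma Pi_sum_sq:
  fixes D :: "'a \<Rightarrow> real" and n :: nat
  assumes i2: "integrable (measure_pmf p) (\<lambda>j. (D j)\<^sup>2)" and m0: "measure_pmf.expectation p D = 0"
  shows "integrable (measure_pmf (Pi_pmf {..<n} d (\<lambda>_. p))) (\<lambda>\<omega>. (\<Sum>i<n. D (\<omega> i))\<^sup>2)"
    "measure_pmf.expectation (Pi_pmf {..<n} d (\<lambda>_. p)) (\<lambda>\<omega>. (\<Sum>i<n. D (\<omega> i))\<^sup>2)
       = real n * measure_pmf.expectation p (\<lambda>j. (D j)\<^sup>2)"
proof -
  let ?M = "measure_pmf (Pi_pmf {..<n} d (\<lambda>_. p))"
  have ps: "prob_space ?M" by (rule measure_pmf.prob_space_axioms)
  have i1: "integrable (measure_pmf p) D"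
    by (rule measure_pmf.square_integrable_imp_integrable[OF _ i2]) simp
  have ind: "prob_space.indep_vars ?M (\<lambda>_. borel) (\<lambda>i \<omega>. D (\<omega> i)) {..<n}"
    using Pi_indep[where h="\<lambda>_. D" and I="{..<n}" and d=d and p="\<lambda>_. p"] by simp
  have pair: "integrable ?M (\<lambda>\<omega>. D (\<omega> i) * D (\<omega> j)) \<and>
      measure_pmf.expectation (Pi_pmf {..<n} d (\<lambda>_. p)) (\<lambda>\<omega>. D (\<omega> i) * D (\<omega> j))
       = (if i = j then measure_pmf.expectation p (\<lambda>j. (D j)\<^sup>2) else 0)"
    if ij: "i < n" "j < n" for i j
  proof (cases "i = j")
    case True
    have e: "(\<lambda>\<omega>. D (\<omega> i) * D (\<omega> j)) = (\<lambda>\<omega>. (D (\<omega> i))\<^sup>2)"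
      using True by (simp add: power2_eq_square)
    have "integrable ?M (\<lambda>\<omega>. (D (\<omega> i))\<^sup>2)"
      using Pi_comp_integrable[OF ij(1), where h="\<lambda>j. (D j)\<^sup>2" and d=d and p=p] i2 by blast
    moreover have "measure_pmf.expectation (Pi_pmf {..<n} d (\<lambda>_. p)) (\<lambda>\<omega>. (D (\<omega> i))\<^sup>2) = measure_pmf.expectation p (\<lambda>j. (D j)\<^sup>2)"
      by (rule Pi_comp_integral[OF ij(1)])
    ultimately show ?thesis unfolding e using True by simp
  next
    case False
    have ind2: "prob_space.indep_vars ?M (\<lambda>_. borel) (\<lambda>i \<omega>. D (\<omega> i)) {i, j}"
      by (rule prob_space.indep_vars_subset[OF ps ind]) (use ij in auto)
    have ii: "integrable ?M (\<lambda>\<omega>. D (\<omega> l))" if "l \<in> {i, j}" for l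
    proof -
      have "l < n" using that ij by auto
      then show ?thesis using Pi_comp_integrable[where i=l and n=n and h=D and d=d and p=p] i1 by blast
    qed
    have "integrable ?M (\<lambda>\<omega>. \<Prod>l\<in>{i, j}. D (\<omega> l))"
      by (rule prob_space.indep_vars_integrable[OF ps _ ind2 ii]) auto
    moreover have "(\<integral>\<omega>. (\<Prod>l\<in>{i, j}. D (\<omega> l)) \<partial>?M) = (\<Prod>l\<in>{i, j}. \<integral>\<omega>. D (\<omega> l) \<partial>?M)"
      by (rule prob_space.indep_vars_lebesgue_integral[OF ps _ ind2 ii]) auto
    moreover have "(\<integral>\<omega>. D (\<omega> i) \<partial>?M) = 0"
      using Pi_comp_integral[OF ij(1), where h=D and d=d and p=p] m0 by simp
    moreover have "(\<Prod>l\<in>{i, j}. D (\<omega> l)) = D (\<omega> i) * D (\<omega> j)" for \<omega>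
      using False by simp
    moreover have "(\<Prod>l\<in>{i, j}. \<integral>\<omega>. D (\<omega> l) \<partial>?M) = (\<integral>\<omega>. D (\<omega> i) \<partial>?M) * (\<integral>\<omega>. D (\<omega> j) \<partial>?M)"
      using False by simp
    ultimately show ?thesis using False by simp
  qed
  have sq: "(\<Sum>i<n. D (\<omega> i))\<^sup>2 = (\<Sum>i<n. \<Sum>j<n. D (\<omega> i) * D (\<omega> j))" for \<omega>
    by (simp add: power2_eq_square sum_product)
  show "integrable ?M (\<lambda>\<omega>. (\<Sum>i<n. D (\<omega> i))\<^sup>2)"
    unfolding sq using pair by (intro Bochner_Integration.integrable_sum) auto
  have "measure_pmf.expectation (Pi_pmf {..<n} d (\<lambda>_. p)) (\<lambda>\<omega>. (\<Sum>i<n. D (\<omega> i))\<^sup>2)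
      = (\<Sum>i<n. \<Sum>j<n. measure_pmf.expectation (Pi_pmf {..<n} d (\<lambda>_. p)) (\<lambda>\<omega>. D (\<omega> i) * D (\<omega> j)))"
    unfolding sq using pair
    by (subst Bochner_Integration.integral_sum) (auto intro!: sum.cong Bochner_Integration.integral_sum Bochner_Integration.integrable_sum)
  also have "\<dots> = (\<Sum>i<n. \<Sum>j<n. (if i = j then measure_pmf.expectation p (\<lambda>j. (D j)\<^sup>2) else 0))"
    using pair by (intro sum.cong refl) auto
  also have "\<dots> = real n * measure_pmf.expectation p (\<lambda>j. (D j)\<^sup>2)"
    by (simp add: sum.delta)
  finally show "measure_pmf.expectation (Pi_pmf {..<n} d (\<lambda>_. p)) (\<lambda>\<omega>. (\<Sum>i<n. D (\<omega> i))\<^sup>2)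
       = real n * measure_pmf.expectation p (\<lambda>j. (D j)\<^sup>2)" .
qed

definition pk :: "nat \<Rightarrow> real \<Rightarrow> real" where
  "pk k m = exp (- m) * m ^ k / fact k"

definition dpk :: "nat \<Rightarrow> real \<Rightarrow> real" where
  "dpk k m = exp (- m) * (m ^ k - real k * m ^ (k - 1)) / fact k"

lemma fk_Suc: "fk (Suc k) m = fk k m + pk (Suc k) m"
  by (simp add: fk_def pk_def algebra_simps)

lemma pk_Suc: "pk (Suc k) m * real (Suc k) = m * pk k m"
  by (simp add: pk_def field_simps del: of_nat_Suc)

lemma DERIV_pk: "((\<lambda>m. - pk k m) has_real_derivative dpk k m) (at m)"
proof -
  have d1: "((\<lambda>m. exp (- m)) has_real_derivative - exp (- m)) (at m)"
    by (auto intro!: derivative_eq_intros)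
  have d2: "((\<lambda>m. m ^ k) has_real_derivative real k * m ^ (k - 1)) (at m)"
    using DERIV_pow[of k m] by simp
  have "((\<lambda>m. exp (- m) * m ^ k) has_real_derivative (- exp (- m)) * m ^ k + real k * m ^ (k - 1) * exp (- m)) (at m)"
    by (rule DERIV_mult[OF d1 d2])
  then have "((\<lambda>m. exp (- m) * m ^ k / fact k) has_real_derivative ((- exp (- m)) * m ^ k + real k * m ^ (k - 1) * exp (- m)) / fact k) (at m)"
    by (rule DERIV_cdivide)
  then have "((\<lambda>m. - (exp (- m) * m ^ k / fact k)) has_real_derivative - (((- exp (- m)) * m ^ k + real k * m ^ (k - 1) * exp (- m)) / fact k)) (at m)"
    by (rule DERIV_minus)
  moreover have "- (((- exp (- m)) * m ^ k + real k * m ^ (k - 1) * exp (- m)) / fact k) = dpk k m"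
    by (simp add: dpk_def algebra_simps diff_divide_distrib add_divide_distrib)
  ultimately show ?thesis by (simp add: pk_def)
qed

lemma DERIV_fk: "(fk k has_real_derivative - pk k m) (at m)"
proof (induction k)
  case 0
  have "fk 0 = (\<lambda>m. exp (- m))" by (auto simp: fk_def)
  then show ?case unfolding pk_def
    by (auto intro!: derivative_eq_intros)
next
  case (Suc k)
  have "((\<lambda>m. fk k m + pk (Suc k) m) has_real_derivative (- pk k m + (pk k m - pk (Suc k) m))) (at m)"
  proof (intro DERIV_add Suc.IH)
    have "((\<lambda>m. - pk (Suc k) m) has_real_derivative dpk (Suc k) m) (at m)" by (rule DERIV_pk)
    then have "((\<lambda>m. - (- pk (Suc k) m)) has_real_derivative - dpk (Suc k) m) (at m)"
      by (rule DERIV_minus)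
    moreover have "- dpk (Suc k) m = pk k m - pk (Suc k) m"
      by (simp add: dpk_def pk_def field_simps del: of_nat_Suc)
    ultimately show "(pk (Suc k) has_real_derivative pk k m - pk (Suc k) m) (at m)" by simp
  qed
  then show ?case by (simp add: fk_Suc[abs_def])
qed

lemma pow_fact_le_exp:
  assumes "(m::real) \<ge> 0"
  shows "m ^ j / fact j \<le> exp m"
proof -
  have "sum (\<lambda>j. m ^ j / fact j) {j} \<le> (\<Sum>j. m ^ j / fact j)"
    by (rule sum_le_suminf) (use assms exp_series_real[of m] in \<open>auto simp: sums_iff\<close>)
  also have "\<dots> = exp m" using exp_series_real[of m] by (simp add: sums_iff)
  finally show ?thesis by simp
qed


lemma dpk_bound:
  assumes m: "m \<ge> 0"
  shows "\<bar>dpk k m\<bar> \<le> 2"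
proof -
  have a: "m ^ k / fact k \<le> exp m" by (rule pow_fact_le_exp[OF m])
  have b0: "real k * m ^ (k - 1) / fact k \<le> exp m"
  proof (cases k)
    case 0 then show ?thesis by simp
  next
    case (Suc j)
    have "real k * m ^ (k - 1) / fact k = m ^ j / fact j"
      using Suc by (simp add: field_simps del: of_nat_Suc)
    then show ?thesis using pow_fact_le_exp[OF m, of j] by simp
  qed
  have nn1: "0 \<le> m ^ k / fact k" using m by simp
  have nn2: "0 \<le> real k * m ^ (k - 1) / fact k" using m by simp
  have "\<bar>dpk k m\<bar> = exp (- m) * \<bar>m ^ k / fact k - real k * m ^ (k - 1) / fact k\<bar>"
  proof -
    have "m ^ k / fact k - real k * m ^ (k - 1) / fact k = (m ^ k - real k * m ^ (k - 1)) / fact k"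
      by (simp add: diff_divide_distrib)
    then show ?thesis by (simp add: dpk_def abs_mult abs_divide)
  qed
  also have "\<dots> \<le> exp (- m) * (exp m + exp m)"
  proof (rule mult_left_mono)
    show "\<bar>m ^ k / fact k - real k * m ^ (k - 1) / fact k\<bar> \<le> exp m + exp m"
      using a b0 nn1 nn2 by (simp add: abs_le_iff)
  qed simp
  also have "\<dots> = 2" by (simp add: exp_minus field_simps)
  finally show ?thesis .
qed

lemma taylor_fk:
  assumes x: "x \<ge> 0" and mu: "mu > 0"
  shows "\<bar>fk k x - fk k mu + pk k mu * (x - mu)\<bar> \<le> (x - mu)\<^sup>2"
proof (cases "x = mu")
  case True then show ?thesis by simp
next
  case False
  define diff where "diff i = (if i = 0 then fk k else if i = 1 then (\<lambda>m. - pk k m) else dpk k)" for i :: nat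
  have "\<exists>t. (if x < mu then x < t \<and> t < mu else mu < t \<and> t < x) \<and>
         fk k x = (\<Sum>m<2. diff m mu / fact m * (x - mu) ^ m) + diff 2 t / fact 2 * (x - mu) ^ 2"
  proof (rule Taylor[of 2 diff "fk k" 0 "max x mu"])
    show "diff 0 = fk k" by (simp add: diff_def)
    show "\<forall>m t. m < 2 \<and> 0 \<le> t \<and> t \<le> max x mu \<longrightarrow> (diff m has_real_derivative diff (Suc m) t) (at t)"
    proof (intro allI impI)
      fix m :: nat and t :: real assume "m < 2 \<and> 0 \<le> t \<and> t \<le> max x mu"
      then have "m = 0 \<or> m = 1" by auto
      then show "(diff m has_real_derivative diff (Suc m) t) (at t)"
        using DERIV_fk[of k t] DERIV_pk[of k t] by (auto simp: diff_def)
    qed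
  qed (use x mu False in auto)
  then obtain t where t: "(if x < mu then x < t \<and> t < mu else mu < t \<and> t < x)"
    and eq: "fk k x = (\<Sum>m<2. diff m mu / fact m * (x - mu) ^ m) + diff 2 t / fact 2 * (x - mu) ^ 2"
    by blast
  have t0: "t \<ge> 0" using t x mu by (auto split: if_splits)
  have "(\<Sum>m<2. diff m mu / fact m * (x - mu) ^ m) = fk k mu - pk k mu * (x - mu)"
    by (simp add: diff_def numeral_2_eq_2)
  then have "fk k x - fk k mu + pk k mu * (x - mu) = dpk k t / 2 * (x - mu)\<^sup>2"
    using eq by (simp add: diff_def)
  also have "\<bar>\<dots>\<bar> \<le> (x - mu)\<^sup>2"
    using mult_right_mono[OF dpk_bound[OF t0, of k] zero_le_power2[of "x - mu"]] by (simp add: abs_mult)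
  finally show ?thesis .
qed

lemma pow_limit_neg:
  fixes a :: "nat \<Rightarrow> real"
  assumes a: "a \<longlonglongrightarrow> A" and neg: "\<And>n. a n \<le> 0"
  shows "(\<lambda>n. (1 + a n / real n) ^ n) \<longlonglongrightarrow> exp A"
proof -
  have A0: "A \<le> 0"
    using a neg by (intro LIMSEQ_le_const2[OF a]) auto
  have ev1: "eventually (\<lambda>n. \<bar>a n - A\<bar> < 1) sequentially"
    using a unfolding tendsto_iff dist_real_def by auto
  have ev2: "eventually (\<lambda>n. real n \<ge> 1 - A) sequentially"
    by (rule eventually_sequentiallyI[of "nat \<lceil>1 - A\<rceil>"]) linarith
  have bnd: "eventually (\<lambda>n. norm ((1 + a n / real n) ^ n - (1 + A / real n) ^ n) \<le> \<bar>a n - A\<bar>) sequentially"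
    using ev1 ev2
  proof eventually_elim
    case (elim n)
    have npos: "real n > 0" using elim A0 by linarith
    have h1: "a n \<ge> - real n" using elim by linarith
    have h2: "A \<ge> - real n" using elim by linarith
    have x1: "\<bar>1 + a n / real n\<bar> \<le> 1"
      using npos h1 neg[of n] by (auto simp: abs_le_iff field_simps)
    have x2: "\<bar>1 + A / real n\<bar> \<le> 1"
      using npos h2 A0 by (auto simp: abs_le_iff field_simps)
    have "norm ((1 + a n / real n) ^ n - (1 + A / real n) ^ n) \<le> real n * norm ((1 + a n / real n) - (1 + A / real n))"
      by (rule norm_power_diff) (use x1 x2 in auto)
    also have "\<dots> = \<bar>a n - A\<bar>"
      using npos by (simp add: diff_divide_distrib[symmetric] abs_divide)
    finally show ?case .
  qed
  have "(\<lambda>n. \<bar>a n - A\<bar>) \<longlonglongrightarrow> 0"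
  proof -
    have "(\<lambda>n. a n - A) \<longlonglongrightarrow> 0" using a by (rule LIM_zero)
    then show ?thesis by (rule tendsto_rabs_zero)
  qed
  then have "(\<lambda>n. (1 + a n / real n) ^ n - (1 + A / real n) ^ n) \<longlonglongrightarrow> 0"
    by (rule Lim_null_comparison[OF bnd])
  from tendsto_add[OF this tendsto_exp_limit_sequentially[of A]]
  show ?thesis by simp
qed

lemma char_distr_scale:
  "char (distr std_normal_distribution borel (\<lambda>x. c * x)) t = complex_of_real (exp (- ((t * c)\<^sup>2) / 2))"
proof -
  have "char (distr std_normal_distribution borel (\<lambda>x. c * x)) t = (CLINT x|std_normal_distribution. iexp (t * (c * x)))"
    unfolding char_def by (subst integral_distr) auto
  also have "\<dots> = char std_normal_distribution (t * c)"
    unfolding char_def by (simp add: mult.assoc)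
  finally show ?thesis by (simp add: char_std_normal_distribution)
qed

lemma min_div_pos:
  assumes "(n::real) > 0"
  shows "min (a / n) (b / n) = min a b / n"
  using assms by (cases "a \<le> b") (auto simp: min_def divide_le_cancel)

lemma min_scale:
  assumes n: "(n::real) > 0"
  shows "min (6 * (v / sqrt n)\<^sup>2) (\<bar>t\<bar> * \<bar>v / sqrt n\<bar> ^ 3) = min (6 * v\<^sup>2) (\<bar>t\<bar> * \<bar>v\<bar> ^ 3 / sqrt n) / n"
proof -
  have s: "sqrt n ^ 2 = n" using n by simp
  have s3: "sqrt n ^ 3 = n * sqrt n" using s by (simp add: power3_eq_cube power2_eq_square)
  have a: "6 * (v / sqrt n)\<^sup>2 = (6 * v\<^sup>2) / n"
    using s by (simp add: power_divide)
  have b: "\<bar>t\<bar> * \<bar>v / sqrt n\<bar> ^ 3 = (\<bar>t\<bar> * \<bar>v\<bar> ^ 3 / sqrt n) / n"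
    using n s3 by (simp add: abs_divide power_divide)
  show ?thesis unfolding a b by (rule min_div_pos[OF n])
qed

lemma clt_tri:
  fixes \<nu> :: "nat \<Rightarrow> nat pmf" and V :: "nat \<Rightarrow> nat \<Rightarrow> real" and s :: real
  assumes s: "s > 0"
    and ev: "eventually (\<lambda>n. integrable (measure_pmf (\<nu> n)) (\<lambda>j. (V n j)\<^sup>2) \<and> measure_pmf.expectation (\<nu> n) (V n) = 0) sequentially"
    and var: "(\<lambda>n. measure_pmf.expectation (\<nu> n) (\<lambda>j. (V n j)\<^sup>2)) \<longlonglongrightarrow> s"
    and lind: "\<And>t. (\<lambda>n. measure_pmf.expectation (\<nu> n) (\<lambda>j. min (6 * (V n j)\<^sup>2) (\<bar>t\<bar> * \<bar>V n j\<bar> ^ 3 / sqrt (real n)))) \<longlonglongrightarrow> 0"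
  shows "weak_conv_m (\<lambda>n. distr (measure_pmf (Pi_pmf {..<n} 0 (\<lambda>_. \<nu> n))) borel (\<lambda>\<omega>. \<Sum>i<n. V n (\<omega> i) / sqrt (real n)))
           (distr std_normal_distribution borel (\<lambda>x. sqrt s * x))"
proof (rule levy_continuity)
  show "real_distribution (distr (measure_pmf (Pi_pmf {..<n} 0 (\<lambda>_. \<nu> n))) borel (\<lambda>\<omega>. \<Sum>i<n. V n (\<omega> i) / sqrt (real n)))" for n
    by (rule prob_space.real_distribution_distr[OF measure_pmf.prob_space_axioms]) simp
  show "real_distribution (distr std_normal_distribution borel (\<lambda>x. sqrt s * x))"
    by (rule prob_space.real_distribution_distr[OF prob_space_normal_density]) auto
  fix t :: real
  define sn where "sn n = measure_pmf.expectation (\<nu> n) (\<lambda>j. (V n j)\<^sup>2)" for n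
  define L where "L n = measure_pmf.expectation (\<nu> n) (\<lambda>j. min (6 * (V n j)\<^sup>2) (\<bar>t\<bar> * \<bar>V n j\<bar> ^ 3 / sqrt (real n)))" for n
  define \<phi> where "\<phi> n = char (distr (measure_pmf (\<nu> n)) borel (\<lambda>j. V n j / sqrt (real n))) t" for n
  define w where "w n = 1 + (- (t\<^sup>2 * sn n / 2)) / real n" for n
  have snn: "sn n \<ge> 0" for n unfolding sn_def by simp
  have prod: "char (distr (measure_pmf (Pi_pmf {..<n} 0 (\<lambda>_. \<nu> n))) borel (\<lambda>\<omega>. \<Sum>i<n. V n (\<omega> i) / sqrt (real n))) t
       = \<phi> n ^ n" for n
  proof -
    let ?M = "measure_pmf (Pi_pmf {..<n} 0 (\<lambda>_. \<nu> n))"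
    have ind: "prob_space.indep_vars ?M (\<lambda>_. borel) (\<lambda>i \<omega>. V n (\<omega> i) / sqrt (real n)) {..<n}"
      using Pi_indep[where h="\<lambda>_ j. V n j / sqrt (real n)" and I="{..<n}" and d=0 and p="\<lambda>_. \<nu> n"] by simp
    have "char (distr ?M borel (\<lambda>\<omega>. \<Sum>i<n. V n (\<omega> i) / sqrt (real n))) t
        = (\<Prod>i<n. char (distr ?M borel (\<lambda>\<omega>. V n (\<omega> i) / sqrt (real n))) t)"
      by (rule prob_space.char_distr_sum[OF measure_pmf.prob_space_axioms ind])
    also have "\<dots> = (\<Prod>i<n. \<phi> n)"
    proof (intro prod.cong refl)
      fix i assume "i \<in> {..<n}"
      then have i: "i < n" by simp
      have "char (distr ?M borel (\<lambda>\<omega>. V n (\<omega> i) / sqrt (real n))) t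
          = (CLINT \<omega>|?M. iexp (t * (V n (\<omega> i) / sqrt (real n))))"
        unfolding char_def by (subst integral_distr) auto
      also have "\<dots> = (CLINT j|measure_pmf (\<nu> n). iexp (t * (V n j / sqrt (real n))))"
        by (rule Pi_comp_integral[OF i, where h="\<lambda>j. iexp (t * (V n j / sqrt (real n)))"])
      also have "\<dots> = \<phi> n"
        unfolding \<phi>_def char_def by (subst integral_distr) auto
      finally show "char (distr ?M borel (\<lambda>\<omega>. V n (\<omega> i) / sqrt (real n))) t = \<phi> n" .
    qed
    also have "\<dots> = \<phi> n ^ n" by simp
    finally show ?thesis .
  qed
  have approx: "eventually (\<lambda>n. cmod (\<phi> n - complex_of_real (w n)) \<le> t\<^sup>2 / 6 * L n / real n) sequentially"
    using ev eventually_gt_at_top[of 0]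
  proof eventually_elim
    case (elim n)
    then have i2: "integrable (measure_pmf (\<nu> n)) (\<lambda>j. (V n j)\<^sup>2)"
      and m0: "measure_pmf.expectation (\<nu> n) (V n) = 0" and npos: "real n > 0" by auto
    have i1: "integrable (measure_pmf (\<nu> n)) (V n)"
      by (rule measure_pmf.square_integrable_imp_integrable[OF _ i2]) simp
    let ?X = "\<lambda>j. V n j / sqrt (real n)"
    have iX: "integrable (measure_pmf (\<nu> n)) ?X" using i1 by simp
    have iX2: "integrable (measure_pmf (\<nu> n)) (\<lambda>j. (?X j)\<^sup>2)" using i2 by (simp add: power_divide)
    have mX: "measure_pmf.expectation (\<nu> n) ?X = 0" using m0 by simp
    have vX: "measure_pmf.expectation (\<nu> n) (\<lambda>j. (?X j - measure_pmf.expectation (\<nu> n) ?X)\<^sup>2) = sn n / real n"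
      using mX npos by (simp add: power_divide sn_def)
    have A: "cmod (char (distr (measure_pmf (\<nu> n)) borel ?X) t - complex_of_real (1 - t\<^sup>2 * (sn n / real n) / 2))
        \<le> t\<^sup>2 / 6 * measure_pmf.expectation (\<nu> n) (\<lambda>j. min (6 * (?X j)\<^sup>2) (\<bar>t\<bar> * \<bar>?X j\<bar> ^ 3))"
      by (rule prob_space.char_approx3'[OF measure_pmf.prob_space_axioms _ iX iX2 mX vX refl]) simp
    have eqE: "measure_pmf.expectation (\<nu> n) (\<lambda>j. min (6 * (?X j)\<^sup>2) (\<bar>t\<bar> * \<bar>?X j\<bar> ^ 3)) = L n / real n"
      unfolding L_def min_scale[OF npos] by simp
    have eqW: "1 - t\<^sup>2 * (sn n / real n) / 2 = w n"
      unfolding w_def using npos by (simp add: field_simps)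
    have "cmod (\<phi> n - complex_of_real (w n)) \<le> t\<^sup>2 / 6 * (L n / real n)"
      using A unfolding \<phi>_def eqE eqW .
    then show ?case by (simp only: times_divide_eq_right)
  qed
  have sb: "eventually (\<lambda>n. sn n \<le> s + 1) sequentially"
    using var unfolding sn_def[symmetric] tendsto_iff dist_real_def
    by (auto elim!: allE[of _ 1] eventually_mono)
  have bnd: "eventually (\<lambda>n. cmod (\<phi> n ^ n - complex_of_real (w n) ^ n) \<le> t\<^sup>2 / 6 * L n) sequentially"
    using approx sb eventually_gt_at_top[of 0] eventually_ge_at_top[of "nat \<lceil>t\<^sup>2 * (s + 1)\<rceil>"]
  proof eventually_elim
    case (elim n)
    then have npos: "real n > 0" by simp
    have nbig: "real n \<ge> t\<^sup>2 * (s + 1)" using elim(4) by linarith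
    have rd: "real_distribution (distr (measure_pmf (\<nu> n)) borel (\<lambda>j. V n j / sqrt (real n)))"
      by (rule prob_space.real_distribution_distr[OF measure_pmf.prob_space_axioms]) simp
    have c1: "cmod (\<phi> n) \<le> 1" unfolding \<phi>_def by (rule real_distribution.cmod_char_le_1[OF rd])
    have "t\<^sup>2 * sn n \<le> t\<^sup>2 * (s + 1)" using elim(2) by (intro mult_left_mono) auto
    then have "t\<^sup>2 * sn n / 2 \<le> real n" using nbig s by simp
    moreover have "0 \<le> t\<^sup>2 * sn n / 2" using snn[of n] by simp
    ultimately have "\<bar>w n\<bar> \<le> 1" unfolding w_def using npos by (auto simp: abs_le_iff field_simps)
    then have c2: "cmod (complex_of_real (w n)) \<le> 1" by simp
    have "cmod (\<phi> n ^ n - complex_of_real (w n) ^ n) \<le> real n * cmod (\<phi> n - complex_of_real (w n))"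
      by (rule norm_power_diff[OF c1 c2])
    also have "\<dots> \<le> real n * (t\<^sup>2 / 6 * L n / real n)"
      by (rule mult_left_mono[OF elim(1)]) simp
    also have "\<dots> = t\<^sup>2 / 6 * L n" using npos by simp
    finally show ?case .
  qed
  have L0: "(\<lambda>n. t\<^sup>2 / 6 * L n) \<longlonglongrightarrow> 0"
    unfolding L_def using tendsto_mult_right_zero[OF lind[of t]] .
  have d0: "(\<lambda>n. \<phi> n ^ n - complex_of_real (w n) ^ n) \<longlonglongrightarrow> 0"
    by (rule Lim_null_comparison[OF bnd L0])
  have wlim: "(\<lambda>n. w n ^ n) \<longlonglongrightarrow> exp (- (t\<^sup>2 * s / 2))"
    unfolding w_def
  proof (rule pow_limit_neg)
    show "(\<lambda>n. - (t\<^sup>2 * sn n / 2)) \<longlonglongrightarrow> - (t\<^sup>2 * s / 2)"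
      unfolding sn_def by (intro tendsto_intros var) simp
    show "- (t\<^sup>2 * sn n / 2) \<le> 0" for n using snn[of n] by simp
  qed
  have "(\<lambda>n. complex_of_real (w n ^ n)) \<longlonglongrightarrow> complex_of_real (exp (- (t\<^sup>2 * s / 2)))"
    by (rule tendsto_of_real[OF wlim])
  from tendsto_add[OF d0 this]
  have "(\<lambda>n. \<phi> n ^ n) \<longlonglongrightarrow> complex_of_real (exp (- (t\<^sup>2 * s / 2)))" by simp
  moreover have "char (distr std_normal_distribution borel (\<lambda>x. sqrt s * x)) t = complex_of_real (exp (- (t\<^sup>2 * s / 2)))"
    unfolding char_distr_scale using s by (simp add: power_mult_distrib)
  ultimately show "(\<lambda>n. char (distr (measure_pmf (Pi_pmf {..<n} 0 (\<lambda>_. \<nu> n))) borel (\<lambda>\<omega>. \<Sum>i<n. V n (\<omega> i) / sqrt (real n))) t)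
      \<longlonglongrightarrow> char (distr std_normal_distribution borel (\<lambda>x. sqrt s * x)) t"
    unfolding prod by simp
qed

lemma quad_moments:
  fixes p :: "nat pmf" and c m :: real and k :: nat
  assumes i1: "integrable (measure_pmf p) real" and i2: "integrable (measure_pmf p) (\<lambda>j. (real j)\<^sup>2)"
  shows "integrable (measure_pmf p) (\<lambda>j. c * real j - of_bool (j \<le> k) - m)"
    "measure_pmf.expectation p (\<lambda>j. c * real j - of_bool (j \<le> k) - m)
       = c * measure_pmf.expectation p real - measure_pmf.expectation p (\<lambda>j. of_bool (j \<le> k)) - m"
    "integrable (measure_pmf p) (\<lambda>j. (c * real j - of_bool (j \<le> k) - m)\<^sup>2)"
    "measure_pmf.expectation p (\<lambda>j. (c * real j - of_bool (j \<le> k) - m)\<^sup>2)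
       = c\<^sup>2 * measure_pmf.expectation p (\<lambda>j. (real j)\<^sup>2)
         + (1 + 2 * m) * measure_pmf.expectation p (\<lambda>j. of_bool (j \<le> k)) + m\<^sup>2
         - 2 * c * measure_pmf.expectation p (\<lambda>j. real j * of_bool (j \<le> k))
         - 2 * c * m * measure_pmf.expectation p real"
proof -
  have iI: "integrable (measure_pmf p) (\<lambda>j. of_bool (j \<le> k) :: real)"
    by (rule measure_pmf.integrable_const_bound[where B=1]) auto
  have iJI: "integrable (measure_pmf p) (\<lambda>j. real j * of_bool (j \<le> k))"
    by (rule measure_pmf.integrable_const_bound[where B="real k"]) auto
  have ia: "integrable (measure_pmf p) (\<lambda>j. c * real j)" using i1 by simp
  show "integrable (measure_pmf p) (\<lambda>j. c * real j - of_bool (j \<le> k) - m)"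
    using ia iI by simp
  show "measure_pmf.expectation p (\<lambda>j. c * real j - of_bool (j \<le> k) - m)
       = c * measure_pmf.expectation p real - measure_pmf.expectation p (\<lambda>j. of_bool (j \<le> k)) - m"
    using ia iI i1 by (simp add: Bochner_Integration.integral_diff)
  have eq: "(\<lambda>j. (c * real j - of_bool (j \<le> k) - m)\<^sup>2) = (\<lambda>j. c\<^sup>2 * (real j)\<^sup>2 + (1 + 2 * m) * of_bool (j \<le> k) + m\<^sup>2
      - 2 * c * (real j * of_bool (j \<le> k)) - 2 * c * m * real j)"
    by (rule ext) (auto simp: power2_eq_square algebra_simps)
  have t1: "integrable (measure_pmf p) (\<lambda>j. c\<^sup>2 * (real j)\<^sup>2)" using i2 by simp
  have t2: "integrable (measure_pmf p) (\<lambda>j. (1 + 2 * m) * of_bool (j \<le> k))" using iI by simp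
  have t4: "integrable (measure_pmf p) (\<lambda>j. 2 * c * (real j * of_bool (j \<le> k)))" using iJI by simp
  have t5: "integrable (measure_pmf p) (\<lambda>j. 2 * c * m * real j)" using i1 by simp
  have t12: "integrable (measure_pmf p) (\<lambda>j. c\<^sup>2 * (real j)\<^sup>2 + (1 + 2 * m) * of_bool (j \<le> k))"
    using t1 t2 by (rule Bochner_Integration.integrable_add)
  have t123: "integrable (measure_pmf p) (\<lambda>j. c\<^sup>2 * (real j)\<^sup>2 + (1 + 2 * m) * of_bool (j \<le> k) + m\<^sup>2)"
    by (rule Bochner_Integration.integrable_add[OF t12]) simp
  have t1234: "integrable (measure_pmf p) (\<lambda>j. c\<^sup>2 * (real j)\<^sup>2 + (1 + 2 * m) * of_bool (j \<le> k) + m\<^sup>2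
      - 2 * c * (real j * of_bool (j \<le> k)))"
    using t123 t4 by (rule Bochner_Integration.integrable_diff)
  show "integrable (measure_pmf p) (\<lambda>j. (c * real j - of_bool (j \<le> k) - m)\<^sup>2)"
    unfolding eq using t1234 t5 by (rule Bochner_Integration.integrable_diff)
  show "measure_pmf.expectation p (\<lambda>j. (c * real j - of_bool (j \<le> k) - m)\<^sup>2)
       = c\<^sup>2 * measure_pmf.expectation p (\<lambda>j. (real j)\<^sup>2)
         + (1 + 2 * m) * measure_pmf.expectation p (\<lambda>j. of_bool (j \<le> k)) + m\<^sup>2
         - 2 * c * measure_pmf.expectation p (\<lambda>j. real j * of_bool (j \<le> k))
         - 2 * c * m * measure_pmf.expectation p real"
    unfolding eq
    apply (subst Bochner_Integration.integral_diff[OF t1234 t5])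
    apply (subst Bochner_Integration.integral_diff[OF t123 t4])
    apply (subst Bochner_Integration.integral_add[OF t12])
     apply simp
    apply (subst Bochner_Integration.integral_add[OF t1 t2])
    by simp
qed

definition cc :: "real \<Rightarrow> nat \<Rightarrow> real" where "cc mu k = - pk k mu"
definition qq :: "real \<Rightarrow> nat \<Rightarrow> real" where "qq lam n = 1 - lam / sqrt (real n)"
definition mm :: "real \<Rightarrow> real \<Rightarrow> nat pmf \<Rightarrow> nat \<Rightarrow> nat \<Rightarrow> real" where
  "mm lam mu Y k n = cc mu k * mu - qq lam n * fk k mu - (1 - qq lam n) * measure_pmf.prob Y {..k}"

lemma prob_atMost_pmf:
  fixes p :: "nat pmf" and k :: nat
  shows "measure_pmf.expectation p (\<lambda>j. of_bool (j \<le> k) :: real) = measure_pmf.prob p {..k}"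
proof -
  have "measure_pmf.expectation p (\<lambda>j. of_bool (j \<le> k) :: real) = (\<Sum>a\<le>k. of_bool (a \<le> k) * pmf p a)"
    by (rule integral_measure_pmf_real) auto
  also have "\<dots> = sum (pmf p) {..k}" by simp
  also have "\<dots> = measure_pmf.prob p {..k}" by (simp add: measure_measure_pmf_finite)
  finally show ?thesis .
qed

lemma qq_lim: "(\<lambda>n. qq lam n) \<longlonglongrightarrow> 1"
proof -
  have "(\<lambda>n. lam / sqrt (real n)) \<longlonglongrightarrow> 0"
    by (intro tendsto_divide_0[OF tendsto_const] filterlim_compose[OF sqrt_at_top] filterlim_real_sequentially
        filterlim_at_top_imp_at_infinity)
  from tendsto_diff[OF tendsto_const[of 1] this] show ?thesis by (simp add: qq_def[abs_def])
qed

lemma qq_bound: assumes "lam > 0" shows "\<bar>1 - qq lam n\<bar> \<le> lam" "\<bar>qq lam n\<bar> \<le> 1 + lam"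
proof -
  have "lam / sqrt (real n) \<le> lam"
  proof (cases "n = 0")
    case False
    then have "sqrt (real n) \<ge> 1" by simp
    then show ?thesis using assms by (simp add: divide_le_eq)
  qed (use assms in simp)
  moreover have "lam / sqrt (real n) \<ge> 0" using assms by simp
  ultimately show "\<bar>1 - qq lam n\<bar> \<le> lam" "\<bar>qq lam n\<bar> \<le> 1 + lam" by (auto simp: qq_def)
qed

locale model =
  fixes lam mu :: real and Y :: "nat pmf" and k :: nat
  assumes lam_pos: "lam > 0" and mu_pos: "mu > 0"
    and Y_mean: "measure_pmf.expectation Y real = mu"
    and Y_sq: "integrable (measure_pmf Y) (\<lambda>j. (real j)\<^sup>2)"
begin

abbreviation "P \<equiv> poisson_pmf mu"
abbreviation "c \<equiv> cc mu k"
abbreviation "f \<equiv> fk k mu"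
abbreviation "PY \<equiv> measure_pmf.prob Y {..k}"
abbreviation "a0 \<equiv> c * mu - f"
abbreviation "Y2 \<equiv> measure_pmf.expectation Y (\<lambda>j. (real j)\<^sup>2)"
abbreviation "YJI \<equiv> measure_pmf.expectation Y (\<lambda>j. real j * of_bool (j \<le> k))"

definition QP :: "real \<Rightarrow> real" where
  "QP m = c\<^sup>2 * (mu\<^sup>2 + mu) + (1 + 2 * m) * f + m\<^sup>2 - 2 * c * (mu * (f + c)) - 2 * c * m * mu"
definition QY :: "real \<Rightarrow> real" where
  "QY m = c\<^sup>2 * Y2 + (1 + 2 * m) * PY + m\<^sup>2 - 2 * c * YJI - 2 * c * m * mu"

lemma Y_int1: "integrable (measure_pmf Y) real"
  by (rule measure_pmf.square_integrable_imp_integrable[OF _ Y_sq]) simp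

lemma f_range: "0 \<le> f" "f \<le> 1"
proof -
  have "measure_pmf.prob P {..k} \<le> 1" by (rule measure_pmf.prob_le_1)
  moreover have "measure_pmf.prob P {..k} \<ge> 0" by (rule measure_nonneg)
  moreover have "measure_pmf.prob P {..k} = f"
    using poisson_cdf[OF mu_pos, of k] prob_atMost_pmf[of "poisson_pmf mu" k] by simp
  ultimately show "0 \<le> f" "f \<le> 1" by linarith+
qed

lemma PY_range: "0 \<le> PY" "PY \<le> 1"
  by (auto simp: measure_pmf.prob_le_1)

lemma P_quad:
  "integrable (measure_pmf P) (\<lambda>j. c * real j - of_bool (j \<le> k) - m)"
  "measure_pmf.expectation P (\<lambda>j. c * real j - of_bool (j \<le> k) - m) = c * mu - f - m"
  "integrable (measure_pmf P) (\<lambda>j. (c * real j - of_bool (j \<le> k) - m)\<^sup>2)"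
  "measure_pmf.expectation P (\<lambda>j. (c * real j - of_bool (j \<le> k) - m)\<^sup>2) = QP m"
  using quad_moments[OF poisson_mean(1)[OF mu_pos] poisson_sq(1)[OF mu_pos], of c k m]
  by (simp_all add: poisson_mean[OF mu_pos] poisson_sq[OF mu_pos] poisson_cdf[OF mu_pos]
      poisson_trunc_mean[OF mu_pos] QP_def cc_def pk_def)

lemma Y_quad:
  "integrable (measure_pmf Y) (\<lambda>j. c * real j - of_bool (j \<le> k) - m)"
  "measure_pmf.expectation Y (\<lambda>j. c * real j - of_bool (j \<le> k) - m) = c * mu - PY - m"
  "integrable (measure_pmf Y) (\<lambda>j. (c * real j - of_bool (j \<le> k) - m)\<^sup>2)"
  "measure_pmf.expectation Y (\<lambda>j. (c * real j - of_bool (j \<le> k) - m)\<^sup>2) = QY m"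
  using quad_moments[OF Y_int1 Y_sq, of c k m]
  by (simp_all add: Y_mean prob_atMost_pmf QY_def)

lemma q_ok: assumes "n \<ge> N0" and "N0 = nat \<lceil>lam\<^sup>2\<rceil> + 1"
  shows "0 \<le> qq lam n" "qq lam n \<le> 1"
proof -
  have "real n \<ge> lam\<^sup>2" "n > 0" using assms by linarith+
  then show "0 \<le> qq lam n" "qq lam n \<le> 1" using q_range[OF lam_pos] by (auto simp: qq_def)
qed


abbreviation "N0 \<equiv> nat \<lceil>lam\<^sup>2\<rceil> + 1"
abbreviation "\<nu> n \<equiv> Xn_pmf lam mu Y n"
abbreviation "mmn n \<equiv> mm lam mu Y k n"
abbreviation "V n j \<equiv> c * real j - of_bool (j \<le> k) - mmn n"

lemma nu_mix: "\<nu> n = mix_pmf (qq lam n) P Y"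
  by (simp add: Xn_pmf_mix qq_def)

lemma L1:
  assumes n: "n \<ge> N0"
  shows "integrable (measure_pmf (\<nu> n)) (\<lambda>j. (V n j)\<^sup>2)"
    "measure_pmf.expectation (\<nu> n) (V n) = 0"
    "measure_pmf.expectation (\<nu> n) (\<lambda>j. (V n j)\<^sup>2) = qq lam n * QP (mmn n) + (1 - qq lam n) * QY (mmn n)"
proof -
  note q = q_ok[OF n refl]
  show "integrable (measure_pmf (\<nu> n)) (\<lambda>j. (V n j)\<^sup>2)"
    unfolding nu_mix by (rule mix_integrable[OF q P_quad(3) Y_quad(3)])
  have "measure_pmf.expectation (\<nu> n) (V n) = qq lam n * (c * mu - f - mmn n) + (1 - qq lam n) * (c * mu - PY - mmn n)"
    unfolding nu_mix by (simp add: mix_integral[OF q P_quad(1) Y_quad(1)] P_quad(2) Y_quad(2))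
  also have "\<dots> = 0" by (simp add: mm_def algebra_simps)
  finally show "measure_pmf.expectation (\<nu> n) (V n) = 0" .
  show "measure_pmf.expectation (\<nu> n) (\<lambda>j. (V n j)\<^sup>2) = qq lam n * QP (mmn n) + (1 - qq lam n) * QY (mmn n)"
    unfolding nu_mix by (simp add: mix_integral[OF q P_quad(3) Y_quad(3)] P_quad(4) Y_quad(4))
qed

lemma mm_lim: "(\<lambda>n. mmn n) \<longlonglongrightarrow> a0"
proof -
  have "(\<lambda>n. c * mu - qq lam n * f - (1 - qq lam n) * PY) \<longlonglongrightarrow> c * mu - 1 * f - (1 - 1) * PY"
    by (intro tendsto_intros qq_lim)
  then show ?thesis by (simp add: mm_def[abs_def])
qed

lemma QP_cont: "(\<lambda>n. QP (g n)) \<longlonglongrightarrow> QP a" if "g \<longlonglongrightarrow> a" for g :: "nat \<Rightarrow> real" and a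
  unfolding QP_def by (intro tendsto_intros that)

lemma QY_cont: "(\<lambda>n. QY (g n)) \<longlonglongrightarrow> QY a" if "g \<longlonglongrightarrow> a" for g :: "nat \<Rightarrow> real" and a
  unfolding QY_def by (intro tendsto_intros that)

lemma L3: "(\<lambda>n. measure_pmf.expectation (\<nu> n) (\<lambda>j. (V n j)\<^sup>2)) \<longlonglongrightarrow> QP a0"
proof -
  have "(\<lambda>n. qq lam n * QP (mmn n) + (1 - qq lam n) * QY (mmn n)) \<longlonglongrightarrow> 1 * QP a0 + (1 - 1) * QY a0"
    by (intro tendsto_intros qq_lim QP_cont QY_cont mm_lim)
  then have "(\<lambda>n. qq lam n * QP (mmn n) + (1 - qq lam n) * QY (mmn n)) \<longlonglongrightarrow> QP a0" by simp
  moreover have "eventually (\<lambda>n. qq lam n * QP (mmn n) + (1 - qq lam n) * QY (mmn n)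
        = measure_pmf.expectation (\<nu> n) (\<lambda>j. (V n j)\<^sup>2)) sequentially"
    using eventually_ge_at_top[of N0] by eventually_elim (simp add: L1(3))
  ultimately show ?thesis by (rule Lim_transform_eventually)
qed

lemma QP_formula: "QP a0 = f * (1 - f) - exp (- 2 * mu) * mu ^ (2 * k + 1) / (fact k)\<^sup>2"
proof -
  have "QP a0 = f * (1 - f) - c\<^sup>2 * mu"
    unfolding QP_def by (simp add: algebra_simps power2_eq_square)
  moreover have "c\<^sup>2 * mu = exp (- 2 * mu) * mu ^ (2 * k + 1) / (fact k)\<^sup>2"
  proof -
    have "exp (- 2 * mu) = exp (- mu) * exp (- mu)" by (simp flip: exp_add)
    moreover have "mu ^ (2 * k + 1) = mu ^ k * mu ^ k * mu" by (simp add: mult_2 power_add)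
    ultimately show ?thesis
      by (simp only:) (simp add: cc_def pk_def power2_eq_square field_simps)
  qed
  ultimately show ?thesis by simp
qed

lemma QP_pos: "QP a0 > 0"
proof -
  define h where "h j = (c * real j - of_bool (j \<le> k) - a0)\<^sup>2" for j :: nat
  have ih: "integrable (count_space UNIV) (\<lambda>j. pmf P j * h j)"
    using P_quad(3)[of a0] unfolding h_def by (simp add: pmf_integrable_iff)
  have nn: "0 \<le> pmf P j * h j" for j unfolding h_def by simp
  have sm: "summable (\<lambda>j. pmf P j * h j)"
    using ih nn unfolding integrable_count_space_nat_iff by simp
  have "QP a0 = (\<Sum>j. pmf P j * h j)"
    using P_quad(4)[of a0] ih unfolding h_def by (simp add: pmf_integral_eq integral_count_space_nat)
  moreover have "sum (\<lambda>j. pmf P j * h j) {Suc k, Suc (Suc k)} \<le> (\<Sum>j. pmf P j * h j)"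
    by (rule sum_le_suminf[OF sm]) (use nn in auto)
  moreover have "sum (\<lambda>j. pmf P j * h j) {Suc k, Suc (Suc k)} > 0"
  proof -
    have c0: "c \<noteq> 0" using mu_pos by (simp add: cc_def pk_def)
    have p1: "pmf P (Suc k) > 0" "pmf P (Suc (Suc k)) > 0" using mu_pos by simp_all
    have hh: "h (Suc k) = (c * real (Suc k) - a0)\<^sup>2" "h (Suc (Suc k)) = (c * real (Suc (Suc k)) - a0)\<^sup>2"
      by (simp_all add: h_def)
    have "h (Suc k) > 0 \<or> h (Suc (Suc k)) > 0"
    proof (rule ccontr)
      assume "\<not> ?thesis"
      then have "c * real (Suc k) - a0 = 0" "c * real (Suc (Suc k)) - a0 = 0"
        unfolding hh by auto
      then have "c = 0" by (simp add: algebra_simps)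
      with c0 show False by simp
    qed
    moreover have "h (Suc k) \<ge> 0" "h (Suc (Suc k)) \<ge> 0" by (simp_all add: h_def)
    ultimately show ?thesis using p1
      by (auto intro: add_pos_nonneg add_nonneg_pos mult_pos_pos)
  qed
  ultimately show ?thesis by linarith
qed

lemma mm_bound:
  fixes n :: nat
  shows "\<bar>mmn n\<bar> \<le> \<bar>c\<bar> * mu + 1 + 2 * lam"
proof -
  note qb = qq_bound[OF lam_pos, of n]
  have "\<bar>mmn n\<bar> \<le> \<bar>c * mu\<bar> + \<bar>qq lam n * f\<bar> + \<bar>(1 - qq lam n) * PY\<bar>"
    unfolding mm_def by linarith
  also have "\<bar>qq lam n * f\<bar> \<le> 1 + lam"
    using qb f_range mult_mono[of "\<bar>qq lam n\<bar>" "1 + lam" "\<bar>f\<bar>" 1] lam_pos by (simp add: abs_mult)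
  also have "\<bar>(1 - qq lam n) * PY\<bar> \<le> lam"
    using qb PY_range mult_mono[of "\<bar>1 - qq lam n\<bar>" "lam" "\<bar>PY\<bar>" 1] lam_pos by (simp add: abs_mult)
  finally show ?thesis using mu_pos by (simp add: abs_mult)
qed

lemma L5: "(\<lambda>n. measure_pmf.expectation (\<nu> n) (\<lambda>j. min (6 * (V n j)\<^sup>2) (\<bar>t\<bar> * \<bar>V n j\<bar> ^ 3 / sqrt (real n)))) \<longlonglongrightarrow> 0"
proof -
  define \<phi> where "\<phi> n j = min (6 * (V n j)\<^sup>2) (\<bar>t\<bar> * \<bar>V n j\<bar> ^ 3 / sqrt (real n))" for n j
  define D where "D = \<bar>c\<bar> * mu + 2 + 2 * lam"
  define w where "w j = 12 * (c\<^sup>2 * (real j)\<^sup>2 + D\<^sup>2)" for j :: nat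
  have D0: "D \<ge> 0" using mu_pos lam_pos by (simp add: D_def)
  have Vb: "\<bar>V n j\<bar> \<le> \<bar>c\<bar> * real j + D" for n j
  proof -
    have t: "\<bar>V n j\<bar> \<le> \<bar>c * real j\<bar> + \<bar>of_bool (j \<le> k) :: real\<bar> + \<bar>mmn n\<bar>"
      by (rule order_trans[OF abs_triangle_ineq4]) (rule add_right_mono[OF abs_triangle_ineq4])
    have "\<bar>of_bool (j \<le> k) :: real\<bar> \<le> 1" by simp
    with t have "\<bar>V n j\<bar> \<le> \<bar>c * real j\<bar> + 1 + \<bar>mmn n\<bar>" by linarith
    then show ?thesis using mm_bound[of n] by (simp add: D_def abs_mult)
  qed
  have phi_nn: "0 \<le> \<phi> n j" for n j by (simp add: \<phi>_def)
  have phi_le: "\<phi> n j \<le> 6 * (V n j)\<^sup>2" for n j by (simp add: \<phi>_def)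
  have phi_w: "\<phi> n j \<le> w j" for n j
  proof -
    have "\<bar>V n j\<bar>\<^sup>2 \<le> (\<bar>c\<bar> * real j + D)\<^sup>2"
      by (rule power_mono[OF Vb abs_ge_zero])
    then have "(V n j)\<^sup>2 \<le> (\<bar>c\<bar> * real j + D)\<^sup>2" by simp
    also have "\<dots> \<le> 2 * (c\<^sup>2 * (real j)\<^sup>2 + D\<^sup>2)"
    proof -
      have e: "(\<bar>c\<bar> * real j + D)\<^sup>2 + (\<bar>c\<bar> * real j - D)\<^sup>2 = 2 * (c\<^sup>2 * (real j)\<^sup>2 + D\<^sup>2)"
        by (simp add: power2_eq_square algebra_simps)
      have "0 \<le> (\<bar>c\<bar> * real j - D)\<^sup>2" by simp
      with e show ?thesis by linarith
    qed
    finally show ?thesis using phi_le[of n j] by (simp add: w_def)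
  qed
  have int_phi: "integrable (measure_pmf p) (\<phi> n)"
    if "integrable (measure_pmf p) (\<lambda>j. (V n j)\<^sup>2)" for p n
  proof (rule Bochner_Integration.integrable_bound)
    show "integrable (measure_pmf p) (\<lambda>j. 6 * (V n j)\<^sup>2)" using that by simp
    show "AE x in measure_pmf p. norm (\<phi> n x) \<le> norm (6 * (V n x)\<^sup>2)"
      using phi_le phi_nn by simp
  qed simp
  have iw: "integrable (measure_pmf P) w"
    using poisson_sq(1)[OF mu_pos] unfolding w_def by simp
  have ptw: "(\<lambda>n. \<phi> n j) \<longlonglongrightarrow> 0" for j
  proof (rule Lim_null_comparison)
    show "eventually (\<lambda>n. norm (\<phi> n j) \<le> \<bar>t\<bar> * (\<bar>c\<bar> * real j + D) ^ 3 / sqrt (real n)) sequentially"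
    proof (rule always_eventually, rule allI)
      fix n
      have "\<bar>V n j\<bar> ^ 3 \<le> (\<bar>c\<bar> * real j + D) ^ 3" using Vb[where n=n and j=j] by (intro power_mono) auto
      then have "\<bar>t\<bar> * \<bar>V n j\<bar> ^ 3 / sqrt (real n) \<le> \<bar>t\<bar> * (\<bar>c\<bar> * real j + D) ^ 3 / sqrt (real n)"
        by (intro divide_right_mono mult_left_mono) auto
      then show "norm (\<phi> n j) \<le> \<bar>t\<bar> * (\<bar>c\<bar> * real j + D) ^ 3 / sqrt (real n)"
        using phi_nn[of n j] by (simp add: \<phi>_def)
    qed
    show "(\<lambda>n. \<bar>t\<bar> * (\<bar>c\<bar> * real j + D) ^ 3 / sqrt (real n)) \<longlonglongrightarrow> 0"
      by (intro tendsto_divide_0[OF tendsto_const] filterlim_compose[OF sqrt_at_top] filterlim_real_sequentially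
          filterlim_at_top_imp_at_infinity)
  qed
  have EP: "(\<lambda>n. measure_pmf.expectation P (\<phi> n)) \<longlonglongrightarrow> measure_pmf.expectation P (\<lambda>j. 0::real)"
  proof (rule integral_dominated_convergence[where w=w])
    show "(\<lambda>j. 0::real) \<in> borel_measurable (measure_pmf P)" by simp
    show "\<phi> i \<in> borel_measurable (measure_pmf P)" for i by simp
    show "integrable (measure_pmf P) w" by (rule iw)
    show "AE x in measure_pmf P. (\<lambda>i. \<phi> i x) \<longlonglongrightarrow> 0" by (rule AE_I2) (rule ptw)
    show "AE x in measure_pmf P. norm (\<phi> i x) \<le> w x" for i
    proof (rule AE_I2)
      fix x show "norm (\<phi> i x) \<le> w x" using phi_w[of i x] phi_nn[of i x] by simp
    qed
  qed
  then have EP': "(\<lambda>n. qq lam n * measure_pmf.expectation P (\<phi> n)) \<longlonglongrightarrow> 1 * 0"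
    by (intro tendsto_mult qq_lim) simp
  have EY: "(\<lambda>n. (1 - qq lam n) * measure_pmf.expectation Y (\<phi> n)) \<longlonglongrightarrow> 0"
  proof (rule Lim_null_comparison)
    show "eventually (\<lambda>n. norm ((1 - qq lam n) * measure_pmf.expectation Y (\<phi> n)) \<le> (1 - qq lam n) * (6 * QY (mmn n))) sequentially"
      using eventually_ge_at_top[of N0]
    proof eventually_elim
      case (elim n)
      note q = q_ok[OF elim refl]
      have i: "integrable (measure_pmf Y) (\<phi> n)" by (rule int_phi[OF Y_quad(3)])
      have "measure_pmf.expectation Y (\<phi> n) \<le> measure_pmf.expectation Y (\<lambda>j. 6 * (V n j)\<^sup>2)"
        by (rule integral_mono[OF i]) (use Y_quad(3) phi_le in auto)
      also have "\<dots> = 6 * QY (mmn n)" using Y_quad(4) by simp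
      finally have a: "measure_pmf.expectation Y (\<phi> n) \<le> 6 * QY (mmn n)" .
      have b: "measure_pmf.expectation Y (\<phi> n) \<ge> 0" using phi_nn by simp
      show ?case using a b q by (simp add: abs_mult mult_left_mono)
    qed
    have "(\<lambda>n. (1 - qq lam n) * (6 * QY (mmn n))) \<longlonglongrightarrow> (1 - 1) * (6 * QY a0)"
      by (intro tendsto_intros qq_lim QY_cont mm_lim)
    then show "(\<lambda>n. (1 - qq lam n) * (6 * QY (mmn n))) \<longlonglongrightarrow> 0" by simp
  qed
  have "(\<lambda>n. qq lam n * measure_pmf.expectation P (\<phi> n) + (1 - qq lam n) * measure_pmf.expectation Y (\<phi> n)) \<longlonglongrightarrow> 1 * 0 + 0"
    by (rule tendsto_add[OF EP' EY])
  moreover have "eventually (\<lambda>n. qq lam n * measure_pmf.expectation P (\<phi> n) + (1 - qq lam n) * measure_pmf.expectation Y (\<phi> n)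
      = measure_pmf.expectation (\<nu> n) (\<phi> n)) sequentially"
    using eventually_ge_at_top[of N0]
  proof eventually_elim
    case (elim n)
    note q = q_ok[OF elim refl]
    show ?case unfolding nu_mix
      by (rule mix_integral[OF q int_phi[OF P_quad(3)] int_phi[OF Y_quad(3)], symmetric])
  qed
  ultimately show ?thesis unfolding \<phi>_def by (simp add: Lim_transform_eventually)
qed

end

context model
begin

abbreviation "s0 \<equiv> QP a0"
abbreviation "tau \<equiv> - lam * (PY - f)"
abbreviation "Mn n \<equiv> measure_pmf (sample_pmf lam mu Y n)"
abbreviation "Zn n \<omega> \<equiv> tau + (\<Sum>i<n. V n (\<omega> i) / sqrt (real n))"

lemma sample_Pi: "sample_pmf lam mu Y n = Pi_pmf {..<n} 0 (\<lambda>_. \<nu> n)"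
  by (simp add: sample_pmf_def)

lemma L6: "weak_conv_m (\<lambda>n. distr (Mn n) borel (\<lambda>\<omega>. \<Sum>i<n. V n (\<omega> i) / sqrt (real n)))
             (distr std_normal_distribution borel (\<lambda>x. sqrt s0 * x))"
proof -
  have ev: "eventually (\<lambda>n. integrable (measure_pmf (\<nu> n)) (\<lambda>j. (V n j)\<^sup>2) \<and> measure_pmf.expectation (\<nu> n) (V n) = 0) sequentially"
    using eventually_ge_at_top[of N0] by eventually_elim (simp add: L1)
  show ?thesis unfolding sample_Pi
    by (rule clt_tri[where \<nu>="\<lambda>n. \<nu> n" and V="\<lambda>n j. V n j", OF QP_pos ev L3 L5])
qed

lemma normal_real_distr: "real_distribution (normal_measure m (sd\<^sup>2))" if "sd > 0" for m sd
proof -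
  have "real_distribution (distr std_normal_distribution borel (\<lambda>x. m + sd * x))"
    by (rule prob_space.real_distribution_distr[OF prob_space_normal_density]) auto
  then show ?thesis using normal_affine_eq[OF that] by simp
qed

lemma L7: "weak_conv_m (\<lambda>n. distr (Mn n) borel (Zn n)) (normal_measure tau s0)"
proof -
  have rd: "real_distribution (distr (Mn n) borel (\<lambda>\<omega>. \<Sum>i<n. V n (\<omega> i) / sqrt (real n)))" for n
    by (rule prob_space.real_distribution_distr[OF measure_pmf.prob_space_axioms]) simp
  have rd2: "real_distribution (distr std_normal_distribution borel (\<lambda>x. sqrt s0 * x))"
    by (rule prob_space.real_distribution_distr[OF prob_space_normal_density]) auto
  have "weak_conv_m (\<lambda>n. distr (distr (Mn n) borel (\<lambda>\<omega>. \<Sum>i<n. V n (\<omega> i) / sqrt (real n))) borel (\<lambda>x. tau + x))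
      (distr (distr std_normal_distribution borel (\<lambda>x. sqrt s0 * x)) borel (\<lambda>x. tau + x))"
    by (rule weak_conv_cont_map[OF rd rd2 L6]) (intro continuous_intros)
  moreover have "distr (distr (Mn n) borel (\<lambda>\<omega>. \<Sum>i<n. V n (\<omega> i) / sqrt (real n))) borel (\<lambda>x. tau + x)
      = distr (Mn n) borel (Zn n)" for n
    by (subst distr_distr) (auto simp: comp_def)
  moreover have "distr (distr std_normal_distribution borel (\<lambda>x. sqrt s0 * x)) borel (\<lambda>x. tau + x)
      = distr std_normal_distribution borel (\<lambda>x. tau + sqrt s0 * x)"
    by (subst distr_distr) (auto simp: comp_def)
  moreover have "\<dots> = normal_measure tau ((sqrt s0)\<^sup>2)"
    using QP_pos by (intro normal_affine_eq) simp
  moreover have "(sqrt s0)\<^sup>2 = s0" using QP_pos by simp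
  ultimately show ?thesis by simp
qed

lemma U_minus_Z:
  assumes n: "n \<ge> N0"
  shows "U n k \<omega> - Zn n \<omega> = sqrt (real n) * (fk k (sample_mean n \<omega>) - f + pk k mu * (sample_mean n \<omega> - mu))"
proof -
  define r where "r = sqrt (real n)"
  define S1 where "S1 = (\<Sum>i<n. real (\<omega> i))"
  define SI where "SI = (\<Sum>i<n. of_bool (\<omega> i \<le> k) :: real)"
  define X where "X = sample_mean n \<omega>"
  define F where "F = emp_cdf n \<omega> k"
  have npos: "real n > 0" using n by simp
  have r0: "r > 0" using npos by (simp add: r_def)
  have rr: "r * r = real n" using npos by (simp add: r_def)
  have X: "X = S1 / real n" by (simp add: X_def S1_def sample_mean_def)
  have F: "F = SI / real n" by (simp add: F_def SI_def emp_cdf_def)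
  have sumV: "(\<Sum>i<n. V n (\<omega> i) / r) = (c * S1 - SI - real n * mmn n) / r"
    by (simp add: S1_def SI_def sum_divide_distrib[symmetric] sum_subtractf sum_distrib_left)
  have q: "qq lam n = 1 - lam / r" by (simp add: qq_def r_def)
  have "U n k \<omega> - Zn n \<omega> = r * (fk k X - F) - tau - (c * S1 - SI - real n * mmn n) / r"
    by (simp add: U_def r_def X_def F_def sumV[unfolded r_def])
  also have "\<dots> = r * (fk k X - c * X + mmn n) - tau"
    unfolding X F rr[symmetric] using r0 by (simp add: field_simps)
  also have "\<dots> = r * (fk k X - f + pk k mu * (X - mu))"
    unfolding mm_def q using r0 by (simp add: field_simps cc_def)
  finally show ?thesis by (simp add: r_def X_def)
qed

lemma sq_centered:
  fixes p :: "nat pmf"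
  assumes i1: "integrable (measure_pmf p) real" and i2: "integrable (measure_pmf p) (\<lambda>j. (real j)\<^sup>2)"
  shows "integrable (measure_pmf p) (\<lambda>j. (real j - m)\<^sup>2)" "integrable (measure_pmf p) (\<lambda>j. real j - m)"
proof -
  have e: "(\<lambda>j. (real j - m)\<^sup>2) = (\<lambda>j. (real j)\<^sup>2 - 2 * m * real j + m\<^sup>2)"
    by (rule ext) (simp add: power2_eq_square algebra_simps)
  have "integrable (measure_pmf p) (\<lambda>j. (real j)\<^sup>2 - 2 * m * real j)"
    using i1 i2 by (intro Bochner_Integration.integrable_diff) auto
  then show "integrable (measure_pmf p) (\<lambda>j. (real j - m)\<^sup>2)"
    unfolding e by (rule Bochner_Integration.integrable_add) simp
  show "integrable (measure_pmf p) (\<lambda>j. real j - m)"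
    using i1 by (rule Bochner_Integration.integrable_diff) simp
qed

abbreviation "KK \<equiv> measure_pmf.expectation P (\<lambda>j. (real j - mu)\<^sup>2) + measure_pmf.expectation Y (\<lambda>j. (real j - mu)\<^sup>2)"

lemma L8: "(\<lambda>n. \<integral>\<omega>. min 1 \<bar>U n k \<omega> - Zn n \<omega>\<bar> \<partial>Mn n) \<longlonglongrightarrow> 0"
proof (rule Lim_null_comparison)
  have iP1: "integrable (measure_pmf P) (\<lambda>j. (real j - mu)\<^sup>2)" "integrable (measure_pmf P) (\<lambda>j. real j - mu)"
    using sq_centered[OF poisson_mean(1)[OF mu_pos] poisson_sq(1)[OF mu_pos]] by auto
  have iY1: "integrable (measure_pmf Y) (\<lambda>j. (real j - mu)\<^sup>2)" "integrable (measure_pmf Y) (\<lambda>j. real j - mu)"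
    using sq_centered[OF Y_int1 Y_sq] by auto
  have eP: "measure_pmf.expectation P (\<lambda>j. real j - mu) = 0"
    using poisson_mean[OF mu_pos] by (simp add: Bochner_Integration.integral_diff)
  have eY: "measure_pmf.expectation Y (\<lambda>j. real j - mu) = 0"
    using Y_int1 Y_mean by (simp add: Bochner_Integration.integral_diff)
  have KP: "measure_pmf.expectation P (\<lambda>j. (real j - mu)\<^sup>2) \<ge> 0" by simp
  have KY: "measure_pmf.expectation Y (\<lambda>j. (real j - mu)\<^sup>2) \<ge> 0" by simp
  show "eventually (\<lambda>n. norm (\<integral>\<omega>. min 1 \<bar>U n k \<omega> - Zn n \<omega>\<bar> \<partial>Mn n) \<le> KK / sqrt (real n)) sequentially"
    using eventually_ge_at_top[of N0]
  proof eventually_elim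
    case (elim n)
    note q = q_ok[OF elim refl]
    have npos: "real n > 0" using elim by simp
    define r where "r = sqrt (real n)"
    have r0: "r > 0" using npos by (simp add: r_def)
    have rr: "r * r = real n" using npos by (simp add: r_def)
    define D where "D j = real j - mu" for j :: nat
    have iD2: "integrable (measure_pmf (\<nu> n)) (\<lambda>j. (D j)\<^sup>2)"
      unfolding nu_mix D_def by (rule mix_integrable[OF q iP1(1) iY1(1)])
    have eD: "measure_pmf.expectation (\<nu> n) D = 0"
      unfolding nu_mix D_def by (simp add: mix_integral[OF q iP1(2) iY1(2)] eP eY)
    have eD2: "measure_pmf.expectation (\<nu> n) (\<lambda>j. (D j)\<^sup>2) \<le> KK"
    proof -
      have "measure_pmf.expectation (\<nu> n) (\<lambda>j. (D j)\<^sup>2)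
          = qq lam n * measure_pmf.expectation P (\<lambda>j. (real j - mu)\<^sup>2) + (1 - qq lam n) * measure_pmf.expectation Y (\<lambda>j. (real j - mu)\<^sup>2)"
        unfolding nu_mix D_def by (rule mix_integral[OF q iP1(1) iY1(1)])
      also have "\<dots> \<le> 1 * measure_pmf.expectation P (\<lambda>j. (real j - mu)\<^sup>2) + 1 * measure_pmf.expectation Y (\<lambda>j. (real j - mu)\<^sup>2)"
        using q KP KY by (intro add_mono mult_right_mono) auto
      finally show ?thesis by simp
    qed
    note PS = Pi_sum_sq[OF iD2 eD, of n 0, folded sample_Pi]
    have pw: "min 1 \<bar>U n k \<omega> - Zn n \<omega>\<bar> \<le> r / (real n)\<^sup>2 * (\<Sum>i<n. D (\<omega> i))\<^sup>2" for \<omega>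
    proof -
      have X0: "sample_mean n \<omega> \<ge> 0" unfolding sample_mean_def by (intro divide_nonneg_nonneg sum_nonneg) auto
      have XD: "sample_mean n \<omega> - mu = (\<Sum>i<n. D (\<omega> i)) / real n"
        using npos by (simp add: sample_mean_def D_def sum_subtractf field_simps)
      have "min 1 \<bar>U n k \<omega> - Zn n \<omega>\<bar> \<le> \<bar>U n k \<omega> - Zn n \<omega>\<bar>" by simp
      also have "\<dots> = r * \<bar>fk k (sample_mean n \<omega>) - f + pk k mu * (sample_mean n \<omega> - mu)\<bar>"
        unfolding U_minus_Z[OF elim] r_def by (simp add: abs_mult)
      also have "\<dots> \<le> r * (sample_mean n \<omega> - mu)\<^sup>2"
        using taylor_fk[OF X0 mu_pos, of k] r0 by (intro mult_left_mono) auto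
      also have "\<dots> = r / (real n)\<^sup>2 * (\<Sum>i<n. D (\<omega> i))\<^sup>2"
        unfolding XD by (simp add: power_divide)
      finally show ?thesis .
    qed
    have imin: "integrable (Mn n) (\<lambda>\<omega>. min 1 \<bar>U n k \<omega> - Zn n \<omega>\<bar>)"
      by (rule measure_pmf.integrable_const_bound[where B=1]) auto
    have "(\<integral>\<omega>. min 1 \<bar>U n k \<omega> - Zn n \<omega>\<bar> \<partial>Mn n) \<le> (\<integral>\<omega>. r / (real n)\<^sup>2 * (\<Sum>i<n. D (\<omega> i))\<^sup>2 \<partial>Mn n)"
      by (rule integral_mono[OF imin]) (use PS(1) pw in auto)
    also have "\<dots> = r / (real n)\<^sup>2 * (real n * measure_pmf.expectation (\<nu> n) (\<lambda>j. (D j)\<^sup>2))"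
      using PS(2) by simp
    also have "\<dots> = measure_pmf.expectation (\<nu> n) (\<lambda>j. (D j)\<^sup>2) / r"
      unfolding rr[symmetric] using r0 by (simp add: field_simps power2_eq_square)
    also have "\<dots> \<le> KK / r"
      using eD2 r0 by (simp add: divide_right_mono)
    finally have "(\<integral>\<omega>. min 1 \<bar>U n k \<omega> - Zn n \<omega>\<bar> \<partial>Mn n) \<le> KK / r" .
    moreover have "(\<integral>\<omega>. min 1 \<bar>U n k \<omega> - Zn n \<omega>\<bar> \<partial>Mn n) \<ge> 0" by simp
    ultimately show ?case by (simp add: r_def)
  qed
  show "(\<lambda>n. KK / sqrt (real n)) \<longlonglongrightarrow> 0"
    by (intro tendsto_divide_0[OF tendsto_const] filterlim_compose[OF sqrt_at_top] filterlim_real_sequentially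
        filterlim_at_top_imp_at_infinity)
qed

lemma main_k: "weak_conv_m (\<lambda>n. distr (Mn n) borel (U n k))
   (normal_measure (- lam * (PY - f)) (f * (1 - f) - exp (- 2 * mu) * mu ^ (2 * k + 1) / (fact k)\<^sup>2))"
proof -
  have rd: "real_distribution (normal_measure tau s0)"
    using normal_real_distr[of "sqrt s0" tau] QP_pos by simp
  have "weak_conv_m (\<lambda>n. distr (Mn n) borel (U n k)) (normal_measure tau s0)"
    by (rule slutsky[OF measure_pmf.prob_space_axioms _ _ rd L7 L8]) simp_all
  then show ?thesis by (simp add: QP_formula)
qed

lemma sample_mean_expect:
  assumes n: "n \<ge> N0"
  shows "integrable (Mn n) (sample_mean n)" "measure_pmf.expectation (sample_pmf lam mu Y n) (sample_mean n) = mu"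
proof -
  note q = q_ok[OF n refl]
  have iv: "integrable (measure_pmf (\<nu> n)) real"
    unfolding nu_mix by (rule mix_integrable[OF q poisson_mean(1)[OF mu_pos] Y_int1])
  have ev: "measure_pmf.expectation (\<nu> n) real = mu"
    unfolding nu_mix by (simp add: mix_integral[OF q poisson_mean(1)[OF mu_pos] Y_int1] poisson_mean(2)[OF mu_pos] Y_mean algebra_simps)
  have ii: "integrable (Mn n) (\<lambda>\<omega>. real (\<omega> i))" if "i < n" for i
    unfolding sample_Pi using Pi_comp_integrable[OF that, where h=real and d=0 and p="\<nu> n"] iv by simp
  have ei: "measure_pmf.expectation (sample_pmf lam mu Y n) (\<lambda>\<omega>. real (\<omega> i)) = mu" if "i < n" for i
    unfolding sample_Pi using Pi_comp_integral[OF that, where h=real and d=0 and p="\<nu> n"] ev by simp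
  have isum: "integrable (Mn n) (\<lambda>\<omega>. \<Sum>i<n. real (\<omega> i))"
    using ii by (intro Bochner_Integration.integrable_sum) auto
  from isum show "integrable (Mn n) (sample_mean n)"
    unfolding sample_mean_def[abs_def] by simp
  have "measure_pmf.expectation (sample_pmf lam mu Y n) (\<lambda>\<omega>. \<Sum>i<n. real (\<omega> i)) = (\<Sum>i<n. mu)"
    using ii ei by (subst Bochner_Integration.integral_sum) auto
  then show "measure_pmf.expectation (sample_pmf lam mu Y n) (sample_mean n) = mu"
    unfolding sample_mean_def[abs_def] using n by simp
qed

end

lemma kstar_zero:
  assumes n: "n > 0" and m: "sample_mean n \<omega> \<le> ln (real n) / 4"
  shows "kstar n \<omega> = 0"
  unfolding kstar_def
proof (rule Least_eq_0)
  define m where "m = sample_mean n \<omega>"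
  have m0: "m \<ge> 0" unfolding m_def sample_mean_def by (intro divide_nonneg_nonneg sum_nonneg) auto
  have npos: "real n > 0" using n by simp
  have st: "sigma_tilde_sq 0 m \<le> 1"
  proof -
    have "sigma_tilde_sq 0 m = exp (- 2 * m) * (exp m - 1 - m)" by (simp add: sigma_tilde_sq_def)
    also have "\<dots> \<le> exp (- 2 * m) * exp m" using m0 by (intro mult_left_mono) auto
    also have "\<dots> = exp (- m)" by (simp flip: exp_add)
    also have "\<dots> \<le> 1" using m0 by simp
    finally show ?thesis .
  qed
  have sq: "sqrt (sigma_tilde_sq 0 m) \<le> 1" using st by simp
  have fk0: "(fk 0 m)\<^sup>2 = exp (- 2 * m)" by (simp add: fk_def power2_eq_square flip: exp_add)
  have e2: "exp (2 * m) \<le> sqrt (real n)"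
  proof -
    have "2 * m \<le> ln (sqrt (real n))" using m npos by (simp add: m_def ln_sqrt)
    then have "exp (2 * m) \<le> exp (ln (sqrt (real n)))" by simp
    then show ?thesis using npos by simp
  qed
  have den: "(fk 0 m)\<^sup>2 * sqrt (real n) > 0" using npos by (simp add: fk0)
  have "of_bool (1 \<le> m) * sqrt (sigma_tilde_sq 0 m) / ((fk 0 m)\<^sup>2 * sqrt (real n)) \<le> 1 / ((fk 0 m)\<^sup>2 * sqrt (real n))"
    using sq den by (intro divide_right_mono) (auto simp: of_bool_def)
  also have "\<dots> \<le> 1"
  proof -
    have "exp (- 2 * m) * exp (2 * m) = 1" by (simp flip: exp_add)
    then have "1 \<le> exp (- 2 * m) * sqrt (real n)" using e2
      by (metis exp_gt_zero mult_left_mono less_imp_le)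
    then show ?thesis using den by (simp add: fk0)
  qed
  also have "\<dots> \<le> exp 1" by simp
  finally show "of_bool (1 \<le> sample_mean n \<omega>) * sqrt (sigma_tilde_sq 0 (sample_mean n \<omega>)) /
      ((fk 0 (sample_mean n \<omega>))\<^sup>2 * sqrt (real n)) \<le> exp 1" by (simp add: m_def)
qed

lemma kstar_conv:
  fixes lam mu :: real and Y :: "nat pmf"
  assumes lam_pos: "lam > 0" and mu_pos: "mu > 0"
    and Y_mean: "measure_pmf.expectation Y real = mu"
    and Y_sq: "integrable (measure_pmf Y) (\<lambda>j. (real j)\<^sup>2)"
  shows "weak_conv_m
             (\<lambda>n. distr (measure_pmf (sample_pmf lam mu Y n)) borel (\<lambda>\<omega>. U n (kstar n \<omega>) \<omega>))
             (normal_measure (lam * (exp (- mu) - pmf Y 0))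
                (exp (- 2 * mu) * (exp mu - 1 - mu)))"
proof -
  interpret model lam mu Y 0 by unfold_locales (fact assms)+
  have e1: "- lam * (measure_pmf.prob Y {..0} - fk 0 mu) = lam * (exp (- mu) - pmf Y 0)"
  proof -
    have "{..0::nat} = {0}" by auto
    then show ?thesis by (simp add: measure_pmf_single fk_def algebra_simps)
  qed
  have e2: "fk 0 mu * (1 - fk 0 mu) - exp (- 2 * mu) * mu ^ (2 * 0 + 1) / (fact 0)\<^sup>2
      = exp (- 2 * mu) * (exp mu - 1 - mu)"
  proof -
    have "exp (- 2 * mu) = exp (- mu) * exp (- mu)" "exp (- mu) * exp mu = 1" by (simp_all flip: exp_add)
    then show ?thesis by (simp add: fk_def algebra_simps)
  qed
  have base: "weak_conv_m (\<lambda>n. distr (Mn n) borel (U n 0))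
      (normal_measure (lam * (exp (- mu) - pmf Y 0)) (exp (- 2 * mu) * (exp mu - 1 - mu)))"
    using main_k unfolding e1 e2 .
  have rd: "real_distribution (normal_measure (lam * (exp (- mu) - pmf Y 0)) (exp (- 2 * mu) * (exp mu - 1 - mu)))"
  proof -
    have "real_distribution (normal_measure (lam * (exp (- mu) - pmf Y 0)) ((sqrt s0)\<^sup>2))"
      using normal_real_distr[of "sqrt s0"] QP_pos by simp
    moreover have "(sqrt s0)\<^sup>2 = exp (- 2 * mu) * (exp mu - 1 - mu)"
      using QP_pos QP_formula e2 by simp
    ultimately show ?thesis by simp
  qed
  have close: "(\<lambda>n. \<integral>\<omega>. min 1 \<bar>U n (kstar n \<omega>) \<omega> - U n 0 \<omega>\<bar> \<partial>Mn n) \<longlonglongrightarrow> 0"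
  proof (rule Lim_null_comparison)
    show "eventually (\<lambda>n. norm (\<integral>\<omega>. min 1 \<bar>U n (kstar n \<omega>) \<omega> - U n 0 \<omega>\<bar> \<partial>Mn n) \<le> mu * (4 / ln (real n))) sequentially"
      using eventually_ge_at_top[of N0] eventually_ge_at_top[of 2]
    proof eventually_elim
      case (elim n)
      have lnpos: "ln (real n) > 0" using elim(2) by simp
      have npos: "n > 0" using elim(2) by simp
      have pw: "min 1 \<bar>U n (kstar n \<omega>) \<omega> - U n 0 \<omega>\<bar> \<le> sample_mean n \<omega> * (4 / ln (real n))" for \<omega>
      proof (cases "sample_mean n \<omega> \<le> ln (real n) / 4")
        case True
        have m0: "sample_mean n \<omega> \<ge> 0" unfolding sample_mean_def by (intro divide_nonneg_nonneg sum_nonneg) auto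
        show ?thesis using kstar_zero[OF npos True] m0 lnpos by simp
      next
        case False
        then have "sample_mean n \<omega> * (4 / ln (real n)) > 1" using lnpos by (simp add: field_simps)
        then show ?thesis by linarith
      qed
      have imin: "integrable (Mn n) (\<lambda>\<omega>. min 1 \<bar>U n (kstar n \<omega>) \<omega> - U n 0 \<omega>\<bar>)"
        by (rule measure_pmf.integrable_const_bound[where B=1]) auto
      have "(\<integral>\<omega>. min 1 \<bar>U n (kstar n \<omega>) \<omega> - U n 0 \<omega>\<bar> \<partial>Mn n) \<le> (\<integral>\<omega>. sample_mean n \<omega> * (4 / ln (real n)) \<partial>Mn n)"
        by (rule integral_mono[OF imin]) (use sample_mean_expect(1)[OF elim(1)] pw in auto)
      also have "\<dots> = mu * (4 / ln (real n))" using sample_mean_expect(2)[OF elim(1)] by simp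
      finally show ?case by simp
    qed
    have "(\<lambda>n. 4 / ln (real n)) \<longlonglongrightarrow> 0"
      by (intro tendsto_divide_0[OF tendsto_const] filterlim_compose[OF ln_at_top] filterlim_real_sequentially
          filterlim_at_top_imp_at_infinity)
    from tendsto_mult_right_zero[OF this, of mu]
    show "(\<lambda>n. mu * (4 / ln (real n))) \<longlonglongrightarrow> 0" .
  qed
  show ?thesis
    by (rule slutsky[OF measure_pmf.prob_space_axioms _ _ rd base close]) simp_all
qed

theorem proposition3:
  fixes lam mu :: real and Y :: "nat pmf"
  assumes lam_pos: "lam > 0" and mu_pos: "mu > 0"
    and Y_mean: "measure_pmf.expectation Y real = mu"
    and Y_sq: "integrable (measure_pmf Y) (\<lambda>j. (real j)\<^sup>2)"
  shows "(\<forall>k::nat.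
           weak_conv_m
             (\<lambda>n. distr (measure_pmf (sample_pmf lam mu Y n)) borel (U n k))
             (normal_measure
                (- lam * (measure_pmf.prob Y {..k} - fk k mu))
                (fk k mu * (1 - fk k mu) - exp (- 2 * mu) * mu ^ (2 * k + 1) / (fact k)\<^sup>2)))
       \<and> weak_conv_m
             (\<lambda>n. distr (measure_pmf (sample_pmf lam mu Y n)) borel (\<lambda>\<omega>. U n (kstar n \<omega>) \<omega>))
             (normal_measure (lam * (exp (- mu) - pmf Y 0))
                (exp (- 2 * mu) * (exp mu - 1 - mu)))"
proof (intro conjI allI)
  fix k :: nat
  interpret model lam mu Y k by unfold_locales (fact assms)+
  show "weak_conv_m
             (\<lambda>n. distr (measure_pmf (sample_pmf lam mu Y n)) borel (U n k))
             (normal_measure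
                (- lam * (measure_pmf.prob Y {..k} - fk k mu))
                (fk k mu * (1 - fk k mu) - exp (- 2 * mu) * mu ^ (2 * k + 1) / (fact k)\<^sup>2))"
    by (rule main_k)
next
  show "weak_conv_m
             (\<lambda>n. distr (measure_pmf (sample_pmf lam mu Y n)) borel (\<lambda>\<omega>. U n (kstar n \<omega>) \<omega>))
             (normal_measure (lam * (exp (- mu) - pmf Y 0))
                (exp (- 2 * mu) * (exp mu - 1 - mu)))"
    by (rule kstar_conv[OF assms])
qed

end
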